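(* In the setting below, if for every $m$ the point $X^x_m$ is the nearest neighbor of $x$ according to an ISIMIN $(\psi_m,\Theta_m)_{m\in\mathbb{N}}$, then $x$ is a Lebesgue point for $\eta$ with respect to $\mathbb{P}_X$ if and only if $\mathbb{E}[|\eta(X^x_m)-\eta(x)|]\to0$ as $m\to\infty$.
   Context: Let $(\mathcal{X},d)$ be a metric space with its Borel $\sigma$-algebra, let $(\Omega,\mathcal{F},\mathbb{P})$ be a probability space, and let $X,X_1,X_2,\dots$ be i.i.d. $\mathcal{X}$-valued random variables with common law $\mathbb{P}_X$. For $x\in\mathcal{X}$ and $r>0$ write $\bar B_r=\{x':d(x,x')\le r\}$. The support of $\mathbb{P}_X$ is the set of $x$ such that $\mathbb{P}_X(\bar B_r(x))>0$ for all $r>0$. Fix $x$ in the support of $\mathbb{P}_X$ and a bounded measurable $\eta:\mathcal{X}\to\mathbb{R}$. An ISIMIN is a sequence $(\psi_m,\Theta_m)_{m\in\mathbb{N}}$ such that for each $m$ there is a measurable space $(\mathcal{Z}_m,\mathcal{G}_m)$, $\Theta_m:\Omega\to\mathcal{Z}_m$ is a random variable independent of $(X_1,\dots,X_m)$, and $\psi_m:[0,\infty)^m\times\mathcal{Z}_m\to\{1,\dots,m\}$ is measurable with $\psi_m(r_1,\dots,r_m,z)\in\arg\min_{k}r_k$ for all arguments. The nearest neighbor of $x$ according to $(\psi_m,\Theta_m)$ is $X^x_m:=X_{\psi_m(d(x,X_1),\dots,d(x,X_m),\Theta_m)}$. The point $x$ is a Lebesgue point if $\mathbb{E}[\mathbb{I}_{\bar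 B_r}(X)\,|\eta(X)-\eta(x)|]/\mathbb{P}_X(\bar B_r)\to 0$ as $r\to 0^+$. *)

theory Defs
  imports "HOL-Probability.Probability"
begin

definition in_support :: "'a::metric_space measure \<Rightarrow> 'a \<Rightarrow> bool" where
  "in_support P x \<longleftrightarrow> (\<forall>r>0. measure P (cball x r) > 0)"

definition lebesgue_point :: "'a::metric_space measure \<Rightarrow> ('a \<Rightarrow> real) \<Rightarrow> 'a \<Rightarrow> bool" where
  "lebesgue_point P \<eta> x \<longleftrightarrow>
     ((\<lambda>r. (\<integral>y. indicator (cball x r) y * \<bar>\<eta> y - \<eta> x\<bar> \<partial>P) / measure P (cball x r))
        \<longlongrightarrow> 0) (at_right 0)"

text \<open>ISIMIN for the sample \<open>X 1, X 2, \<dots>\<close>: for each \<open>m \<ge> 1\<close>, \<open>Z m\<close> is a measurable space,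
  \<open>\<Theta> m\<close> a random variable into \<open>Z m\<close> independent of \<open>(X 1,\<dots>,X m)\<close>, and
  \<open>\<psi> m : [0,\<infinity>)^m \<times> Z m \<rightarrow> {1..m}\<close> measurable, selecting an index of a minimal coordinate.
  Points of \<open>[0,\<infinity>)^m\<close> are (extensional) functions on \<open>{1..m}\<close>.\<close>
definition isimin ::
  "'w measure \<Rightarrow> (nat \<Rightarrow> 'w \<Rightarrow> 'a::metric_space) \<Rightarrow> (nat \<Rightarrow> 'z measure) \<Rightarrow> (nat \<Rightarrow> 'w \<Rightarrow> 'z)
   \<Rightarrow> (nat \<Rightarrow> (nat \<Rightarrow> real) \<Rightarrow> 'z \<Rightarrow> nat) \<Rightarrow> bool" where
  "isimin M X Z \<Theta> \<psi> \<longleftrightarrow>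
    (\<forall>m\<ge>1.
       \<Theta> m \<in> M \<rightarrow>\<^sub>M Z m \<and>
       prob_space.indep_set M
         (sigma_sets (space M) {\<Theta> m -` A \<inter> space M | A. A \<in> sets (Z m)})
         (sigma_sets (space M) {(\<lambda>\<omega>. \<lambda>i\<in>{1..m}. X i \<omega>) -` A \<inter> space M | A.
                                  A \<in> sets (PiM {1..m} (\<lambda>_. (borel :: 'a measure)))}) \<and>
       (\<lambda>(r, z). \<psi> m r z) \<in>
          (PiM {1..m} (\<lambda>_. restrict_space borel {0::real..}) \<Otimes>\<^sub>M Z m) \<rightarrow>\<^sub>M count_space {1..m} \<and>
       (\<forall>r \<in> space (PiM {1..m} (\<lambda>_. restrict_space borel {0::real..})). \<forall>z \<in> space (Z m).
          \<psi> m r z \<in> {1..m} \<and> (\<forall>k\<in>{1..m}. r (\<psi> m r z) \<le> r k)))"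

definition nn_point ::
  "(nat \<Rightarrow> 'w \<Rightarrow> 'a::metric_space) \<Rightarrow> (nat \<Rightarrow> 'w \<Rightarrow> 'z) \<Rightarrow> (nat \<Rightarrow> (nat \<Rightarrow> real) \<Rightarrow> 'z \<Rightarrow> nat)
   \<Rightarrow> 'a \<Rightarrow> nat \<Rightarrow> 'w \<Rightarrow> 'a" where
  "nn_point X \<Theta> \<psi> x m \<omega> = X (\<psi> m (\<lambda>i\<in>{1..m}. dist x (X i \<omega>)) (\<Theta> m \<omega>)) \<omega>"

end

theory Submission
  imports Defs
begin

locale nnset =
  fixes P :: "'a::metric_space measure" and N :: "'z measure" and x :: 'a and m :: nat
    and \<psi> :: "(nat \<Rightarrow> real) \<Rightarrow> 'z \<Rightarrow> nat"
  assumes probP: "prob_space P" and setsP: "sets P = sets borel"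
    and probN: "prob_space N"
    and m1: "1 \<le> m"
    and \<psi>meas: "(\<lambda>(r, z). \<psi> r z) \<in> (PiM {1..m} (\<lambda>_. restrict_space borel {0::real..}) \<Otimes>\<^sub>M N) \<rightarrow>\<^sub>M count_space {1..m}"
    and \<psi>min: "\<And>r z. r \<in> space (PiM {1..m} (\<lambda>_. restrict_space borel {0::real..})) \<Longrightarrow> z \<in> space N \<Longrightarrow>
          \<psi> r z \<in> {1..m} \<and> (\<forall>k\<in>{1..m}. r (\<psi> r z) \<le> r k)"
begin

abbreviation "R \<equiv> PiM {1..m} (\<lambda>_. restrict_space borel {0::real..})"
abbreviation "PP J \<equiv> PiM J (\<lambda>_. P)"

definition "Dv v = (\<lambda>i\<in>{1..m}. dist x (v i))"

lemma spaceP[simp]: "space P = UNIV"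
  using setsP by (metis sets_eq_imp_space_eq space_borel)

lemma measP[measurable_cong]: "sets P = sets borel" by (rule setsP)

lemma dist_meas[measurable]: "(\<lambda>a. dist x a) \<in> borel_measurable P"
  by (subst measurable_cong_sets[OF setsP refl])
     (intro borel_measurable_continuous_onI continuous_intros)

lemma dist_meas'[measurable (raw)]: "f \<in> L \<rightarrow>\<^sub>M P \<Longrightarrow> (\<lambda>w. dist x (f w)) \<in> borel_measurable L"
  using measurable_compose dist_meas by blast

lemma Dv_upd_space:
  assumes "k \<in> {1..m}" "0 \<le> t"
  shows "(Dv v)(k := t) \<in> space R"
  using assms by (auto simp: Dv_def space_PiM PiE_iff space_restrict_space extensional_def)

lemma Dv_space: "Dv v \<in> space R"
  by (auto simp: Dv_def space_PiM PiE_iff space_restrict_space)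

lemma meas_upd:
  assumes k: "k \<in> {1..m}" and g: "g \<in> borel_measurable L" and gpos: "\<And>w. w \<in> space L \<Longrightarrow> 0 \<le> g w"
    and h: "h \<in> L \<rightarrow>\<^sub>M PP ({1..m} - {k})"
  shows "(\<lambda>w. (Dv (h w))(k := g w)) \<in> L \<rightarrow>\<^sub>M R"
proof -
  have "(\<lambda>w. (Dv (h w))(k := g w)) = (\<lambda>w i. (if i \<in> {1..m} then (if i = k then g w else dist x (h w i)) else undefined))"
    using k by (auto simp: Dv_def fun_eq_iff)
  also have "\<dots> \<in> L \<rightarrow>\<^sub>M R"
  proof (rule measurable_PiM_single')
    fix i assume i: "i \<in> {1..m}"
    show "(\<lambda>w. if i \<in> {1..m} then (if i = k then g w else dist x (h w i)) else undefined)
       \<in> L \<rightarrow>\<^sub>M restrict_space borel {0..}"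
    proof (rule measurable_restrict_space2)
      show "(\<lambda>w. if i \<in> {1..m} then (if i = k then g w else dist x (h w i)) else undefined)
        \<in> space L \<rightarrow> {0..}" using i gpos by auto
      show "(\<lambda>w. if i \<in> {1..m} then (if i = k then g w else dist x (h w i)) else undefined)
        \<in> borel_measurable L"
      proof (cases "i = k")
        case True then show ?thesis using i g by simp
      next
        case False
        then have "i \<in> {1..m} - {k}" using i by auto
        then show ?thesis using i False h by simp
      qed
    qed
  qed (auto simp: space_restrict_space gpos)
  finally show ?thesis .
qed

lemma PS: "product_sigma_finite (\<lambda>_::nat. P)"
  unfolding product_sigma_finite_def using probP prob_space_imp_sigma_finite by blast

lemma probPP: "prob_space (PP J)"
  by (intro prob_space_PiM probP)

lemma \<psi>meas'[measurable]: "g \<in> L \<rightarrow>\<^sub>M R \<Longrightarrow> h \<in> L \<rightarrow>\<^sub>M N \<Longrightarrow> (\<lambda>w. \<psi> (g w) (h w)) \<in> L \<rightarrow>\<^sub>M count_space {1..m}"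
  using measurable_compose[OF measurable_Pair \<psi>meas] by (simp add: case_prod_beta)

lemma Dv_meas[measurable]: "Dv \<in> PP {1..m} \<rightarrow>\<^sub>M R"
  unfolding Dv_def
  by (intro measurable_restrict measurable_restrict_space2) auto

definition "hk k t = (\<integral>\<^sup>+v. \<integral>\<^sup>+z. (if \<psi> ((Dv v)(k := t)) z = k then 1 else 0) \<partial>N \<partial>PP ({1..m} - {k}))"

lemma hk_meas[measurable]:
  assumes k: "k \<in> {1..m}"
  shows "(\<lambda>a. hk k (dist x a)) \<in> borel_measurable P"
proof -
  interpret N: prob_space N by (rule probN)
  interpret Q: prob_space "PP ({1..m} - {k})" by (rule probPP)
  interpret QN: pair_sigma_finite "PP ({1..m} - {k})" N ..
  have QNs: "sigma_finite_measure (PP ({1..m} - {k}) \<Otimes>\<^sub>M N)"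
    by (intro prob_space_imp_sigma_finite prob_space_pair probPP probN)
  have m1: "(\<lambda>w. \<psi> ((Dv (fst (snd w)))(k := dist x (fst w))) (snd (snd w)))
     \<in> (P \<Otimes>\<^sub>M (PP ({1..m} - {k}) \<Otimes>\<^sub>M N)) \<rightarrow>\<^sub>M count_space {1..m}"
  proof (rule \<psi>meas')
    show "(\<lambda>w. (Dv (fst (snd w)))(k := dist x (fst w))) \<in> (P \<Otimes>\<^sub>M (PP ({1..m} - {k}) \<Otimes>\<^sub>M N)) \<rightarrow>\<^sub>M R"
      by (rule meas_upd[OF k]) auto
  qed measurable
  have "(\<lambda>w. (if \<psi> ((Dv (fst (snd w)))(k := dist x (fst w))) (snd (snd w)) = k then 1 else 0) :: ennreal)
     \<in> borel_measurable (P \<Otimes>\<^sub>M (PP ({1..m} - {k}) \<Otimes>\<^sub>M N))"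
    using m1 by measurable
  then have "(\<lambda>a. \<integral>\<^sup>+w. (if \<psi> ((Dv (fst w))(k := dist x a)) (snd w) = k then 1 else 0) \<partial>(PP ({1..m} - {k}) \<Otimes>\<^sub>M N)) \<in> borel_measurable P"
    using sigma_finite_measure.borel_measurable_nn_integral_fst[OF QNs, of "\<lambda>w. (if \<psi> ((Dv (fst (snd w)))(k := dist x (fst w))) (snd (snd w)) = k then 1 else 0) :: ennreal"]
    by (simp add: case_prod_beta)
  moreover have "hk k (dist x a) = (\<integral>\<^sup>+w. (if \<psi> ((Dv (fst w))(k := dist x a)) (snd w) = k then 1 else 0) \<partial>(PP ({1..m} - {k}) \<Otimes>\<^sub>M N))" for a
  proof -
    have "(\<lambda>w. (if \<psi> ((Dv (fst w))(k := dist x a)) (snd w) = k then 1 else 0) :: ennreal) \<in> borel_measurable (PP ({1..m} - {k}) \<Otimes>\<^sub>M N)"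
    proof -
      have "(\<lambda>w. (a, w)) \<in> (PP ({1..m} - {k}) \<Otimes>\<^sub>M N) \<rightarrow>\<^sub>M (P \<Otimes>\<^sub>M (PP ({1..m} - {k}) \<Otimes>\<^sub>M N))"
        by measurable
      from measurable_compose[OF this m1] show ?thesis by simp
    qed
    then show ?thesis unfolding hk_def
      by (subst N.nn_integral_fst[symmetric]) (simp_all add: case_prod_beta)
  qed
  ultimately show ?thesis by simp
qed

lemma M1: "(\<lambda>w. \<psi> (Dv (fst w)) (snd w)) \<in> (PP {1..m} \<Otimes>\<^sub>M N) \<rightarrow>\<^sub>M count_space {1..m}"
  by (rule \<psi>meas') measurable

lemma M2:
  assumes k: "k \<in> {1..m}" and t: "0 \<le> t"
  shows "(\<lambda>w. \<psi> ((Dv (fst w))(k := t)) (snd w)) \<in> (PP ({1..m} - {k}) \<Otimes>\<^sub>M N) \<rightarrow>\<^sub>M count_space {1..m}"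
  by (rule \<psi>meas'[OF meas_upd[OF k]]) (use t in auto)

lemma Dv_upd_comp:
  assumes "k \<in> {1..m}" shows "Dv (v(k := a)) = (Dv v)(k := dist x a)"
  using assms by (auto simp: Dv_def fun_eq_iff)

lemma perk:
  assumes k: "k \<in> {1..m}" and \<phi>[measurable]: "\<phi> \<in> borel_measurable P"
  shows "(\<integral>\<^sup>+w. \<phi> (fst w k) * (if \<psi> (Dv (fst w)) (snd w) = k then 1 else 0) \<partial>(PP {1..m} \<Otimes>\<^sub>M N))
       = (\<integral>\<^sup>+a. \<phi> a * hk k (dist x a) \<partial>P)"
proof -
  interpret N: prob_space N by (rule probN)
  interpret PS: product_sigma_finite "\<lambda>_::nat. P" by (rule PS)
  define I' where "I' = {1..m} - {k}"
  have eqI: "{1..m} = insert k I'" "finite I'" "k \<notin> I'" using k by (auto simp: I'_def)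
  have m1[measurable]: "(\<lambda>w. \<psi> (Dv (fst w)) (snd w)) \<in> (PP {1..m} \<Otimes>\<^sub>M N) \<rightarrow>\<^sub>M count_space {1..m}"
    by (rule M1)
  have kk: "k \<in> {1..m}" by (rule k)
  have f1: "(\<lambda>w. \<phi> (fst w k) * (if \<psi> (Dv (fst w)) (snd w) = k then 1 else 0)) \<in> borel_measurable (PP {1..m} \<Otimes>\<^sub>M N)"
    using kk by measurable
  have "(\<integral>\<^sup>+w. \<phi> (fst w k) * (if \<psi> (Dv (fst w)) (snd w) = k then 1 else 0) \<partial>(PP {1..m} \<Otimes>\<^sub>M N))
     = (\<integral>\<^sup>+v. \<integral>\<^sup>+z. \<phi> (v k) * (if \<psi> (Dv v) z = k then 1 else 0) \<partial>N \<partial>PP {1..m})"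
    using N.nn_integral_fst[OF f1] by simp
  also have "\<dots> = (\<integral>\<^sup>+a. \<integral>\<^sup>+v. \<integral>\<^sup>+z. \<phi> ((v(k:=a)) k) * (if \<psi> (Dv (v(k:=a))) z = k then 1 else 0) \<partial>N \<partial>PP I' \<partial>P)"
  proof -
    have "(\<lambda>v. \<integral>\<^sup>+z. \<phi> (v k) * (if \<psi> (Dv v) z = k then 1 else 0) \<partial>N) \<in> borel_measurable (PP {1..m})"
      using N.borel_measurable_nn_integral_fst[OF f1] by simp
    then show ?thesis
      unfolding eqI(1) by (subst PS.product_nn_integral_insert_rev[OF eqI(2,3)]) simp_all
  qed
  also have "\<dots> = (\<integral>\<^sup>+a. \<phi> a * hk k (dist x a) \<partial>P)"
  proof (rule nn_integral_cong)
    fix a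
    have m2: "(\<lambda>w. \<psi> ((Dv (fst w))(k := dist x a)) (snd w)) \<in> (PP I' \<Otimes>\<^sub>M N) \<rightarrow>\<^sub>M count_space {1..m}"
      unfolding I'_def by (rule M2[OF k]) simp
    have f2: "(\<lambda>w. (if \<psi> ((Dv (fst w))(k := dist x a)) (snd w) = k then 1 else 0) :: ennreal) \<in> borel_measurable (PP I' \<Otimes>\<^sub>M N)"
      using m2 by measurable
    have f3: "(\<lambda>v. \<integral>\<^sup>+z. (if \<psi> ((Dv v)(k := dist x a)) z = k then 1 else 0) \<partial>N) \<in> borel_measurable (PP I')"
      using N.borel_measurable_nn_integral_fst[OF f2] by simp
    have "(\<integral>\<^sup>+v. \<integral>\<^sup>+z. \<phi> ((v(k:=a)) k) * (if \<psi> (Dv (v(k:=a))) z = k then 1 else 0) \<partial>N \<partial>PP I')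
        = (\<integral>\<^sup>+v. \<phi> a * \<integral>\<^sup>+z. (if \<psi> ((Dv v)(k := dist x a)) z = k then 1 else 0) \<partial>N \<partial>PP I')"
    proof (rule nn_integral_cong)
      fix v assume v: "v \<in> space (PP I')"
      have f4: "(\<lambda>z. (if \<psi> ((Dv v)(k := dist x a)) z = k then 1 else 0) :: ennreal) \<in> borel_measurable N"
        using measurable_Pair2[OF f2 v] by simp
      show "(\<integral>\<^sup>+z. \<phi> ((v(k:=a)) k) * (if \<psi> (Dv (v(k:=a))) z = k then 1 else 0) \<partial>N)
          = \<phi> a * \<integral>\<^sup>+z. (if \<psi> ((Dv v)(k := dist x a)) z = k then 1 else 0) \<partial>N"
        by (simp add: Dv_upd_comp[OF k] nn_integral_cmult[OF f4])
    qed
    also have "\<dots> = \<phi> a * hk k (dist x a)"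
      by (subst nn_integral_cmult[OF f3]) (simp add: hk_def I'_def)
    finally show "(\<integral>\<^sup>+v. \<integral>\<^sup>+z. \<phi> ((v(k:=a)) k) * (if \<psi> (Dv (v(k:=a))) z = k then 1 else 0) \<partial>N \<partial>PP I')
        = \<phi> a * hk k (dist x a)" .
  qed
  finally show ?thesis .
qed

definition "H t = (\<Sum>k\<in>{1..m}. hk k t)"

lemma H_meas[measurable]: "(\<lambda>a. H (dist x a)) \<in> borel_measurable P"
  unfolding H_def by (intro borel_measurable_sum hk_meas) auto

lemma psi_in:
  assumes "w \<in> space (PP {1..m} \<Otimes>\<^sub>M N)"
  shows "\<psi> (Dv (fst w)) (snd w) \<in> {1..m}" "\<And>j. j \<in> {1..m} \<Longrightarrow> Dv (fst w) (\<psi> (Dv (fst w)) (snd w)) \<le> Dv (fst w) j"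
  using \<psi>min[OF Dv_space, of "snd w"] assms by (auto simp: space_pair_measure)

lemma sum_ind: "p \<in> A \<Longrightarrow> finite A \<Longrightarrow> (\<Sum>k\<in>A. (c k :: ennreal) * (if p = k then 1 else 0)) = c p"
  by (simp add: if_distrib[where f="\<lambda>y. _ * y"] sum.delta' cong: if_cong)

lemma starQ:
  assumes \<phi>[measurable]: "\<phi> \<in> borel_measurable P"
  shows "(\<integral>\<^sup>+w. \<phi> (fst w (\<psi> (Dv (fst w)) (snd w))) \<partial>(PP {1..m} \<Otimes>\<^sub>M N)) = (\<integral>\<^sup>+a. \<phi> a * H (dist x a) \<partial>P)"
proof -
  have m1[measurable]: "(\<lambda>w. \<psi> (Dv (fst w)) (snd w)) \<in> (PP {1..m} \<Otimes>\<^sub>M N) \<rightarrow>\<^sub>M count_space {1..m}"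
    by (rule M1)
  have "(\<integral>\<^sup>+w. \<phi> (fst w (\<psi> (Dv (fst w)) (snd w))) \<partial>(PP {1..m} \<Otimes>\<^sub>M N))
     = (\<integral>\<^sup>+w. (\<Sum>k\<in>{1..m}. \<phi> (fst w k) * (if \<psi> (Dv (fst w)) (snd w) = k then 1 else 0)) \<partial>(PP {1..m} \<Otimes>\<^sub>M N))"
  proof (intro nn_integral_cong)
    fix w assume w: "w \<in> space (PP {1..m} \<Otimes>\<^sub>M N)"
    show "\<phi> (fst w (\<psi> (Dv (fst w)) (snd w))) = (\<Sum>k\<in>{1..m}. \<phi> (fst w k) * (if \<psi> (Dv (fst w)) (snd w) = k then 1 else 0))"
      by (rule sum_ind[symmetric, of _ _ "\<lambda>k. \<phi> (fst w k)", OF psi_in(1)[OF w]]) simp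
  qed
  also have "\<dots> = (\<Sum>k\<in>{1..m}. \<integral>\<^sup>+w. \<phi> (fst w k) * (if \<psi> (Dv (fst w)) (snd w) = k then 1 else 0) \<partial>(PP {1..m} \<Otimes>\<^sub>M N))"
    by (intro nn_integral_sum) measurable
  also have "\<dots> = (\<Sum>k\<in>{1..m}. \<integral>\<^sup>+a. \<phi> a * hk k (dist x a) \<partial>P)"
    by (intro sum.cong refl perk) auto
  also have "\<dots> = (\<integral>\<^sup>+a. (\<Sum>k\<in>{1..m}. \<phi> a * hk k (dist x a)) \<partial>P)"
    by (intro nn_integral_sum[symmetric]) (auto intro!: hk_meas)
  also have "\<dots> = (\<integral>\<^sup>+a. \<phi> a * H (dist x a) \<partial>P)"
    by (simp add: H_def sum_distrib_left)
  finally show ?thesis .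
qed

lemma psi_mono_pt:
  assumes k: "k \<in> {1..m}" and t: "0 \<le> t'" "t' \<le> t" and z: "z \<in> space N"
    and e: "\<psi> ((Dv v)(k := t)) z = k"
  shows "\<psi> ((Dv v)(k := t')) z = k"
proof (cases "t' = t")
  case True with e show ?thesis by simp
next
  case False
  then have lt: "t' < t" using t by simp
  have s1: "(Dv v)(k := t) \<in> space R" "(Dv v)(k := t') \<in> space R"
    using Dv_upd_space[OF k] t by auto
  from \<psi>min[OF s1(1) z] e have A: "\<forall>j\<in>{1..m}. t \<le> ((Dv v)(k := t)) j" by auto
  from \<psi>min[OF s1(2) z] obtain k' where k': "k' = \<psi> ((Dv v)(k := t')) z" "k' \<in> {1..m}"
     "\<forall>j\<in>{1..m}. ((Dv v)(k := t')) k' \<le> ((Dv v)(k := t')) j" by auto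
  show ?thesis
  proof (rule ccontr)
    assume "\<psi> ((Dv v)(k := t')) z \<noteq> k"
    then have ne: "k' \<noteq> k" using k' by simp
    have "((Dv v)(k := t')) k' \<le> ((Dv v)(k := t')) k" using k'(3) k by blast
    then have "((Dv v)(k := t')) k' \<le> t'" by simp
    moreover have "t \<le> ((Dv v)(k := t)) k'" using A k'(2) by auto
    ultimately show False using ne lt by simp
  qed
qed

lemma psi_strict_pt:
  assumes k: "k \<in> {1..m}" and t: "0 \<le> t" and z: "z \<in> space N"
    and all: "\<forall>j\<in>{1..m} - {k}. t < dist x (v j)"
  shows "\<psi> ((Dv v)(k := t)) z = k"
proof -
  have s1: "(Dv v)(k := t) \<in> space R" using Dv_upd_space[OF k t] .
  from \<psi>min[OF s1 z] obtain k' where k': "k' = \<psi> ((Dv v)(k := t)) z" "k' \<in> {1..m}"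
     "\<forall>j\<in>{1..m}. ((Dv v)(k := t)) k' \<le> ((Dv v)(k := t)) j" by auto
  show ?thesis
  proof (rule ccontr)
    assume "\<psi> ((Dv v)(k := t)) z \<noteq> k"
    then have ne: "k' \<noteq> k" using k' by simp
    have "((Dv v)(k := t)) k' \<le> ((Dv v)(k := t)) k" using k'(3) k by blast
    then have "((Dv v)(k := t)) k' \<le> t" by simp
    moreover have "t < dist x (v k')" using all k'(2) ne by auto
    ultimately show False using ne k'(2) by (simp add: Dv_def)
  qed
qed

lemma hk_mono:
  assumes k: "k \<in> {1..m}" and t: "0 \<le> t'" "t' \<le> t"
  shows "hk k t \<le> hk k t'"
  unfolding hk_def
  by (intro nn_integral_mono) (auto intro: psi_mono_pt[OF k t])

lemma hk_le1:
  shows "hk k t \<le> 1"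
proof -
  interpret N: prob_space N by (rule probN)
  interpret Q: prob_space "PP ({1..m} - {k})" by (rule probPP)
  have "hk k t \<le> (\<integral>\<^sup>+v. \<integral>\<^sup>+z. 1 \<partial>N \<partial>PP ({1..m} - {k}))"
    unfolding hk_def by (intro nn_integral_mono) auto
  also have "\<dots> = 1" using prob_space.emeasure_space_1[OF probPP] by (simp add: N.emeasure_space_1)
  finally show ?thesis .
qed

lemma S_meas[measurable]: "{a. t < dist x a} \<in> sets P"
  using dist_meas by measurable

lemma hk_lower:
  assumes k: "k \<in> {1..m}" and t: "0 \<le> t"
  shows "(emeasure P {a. t < dist x a}) ^ (m - 1) \<le> hk k t"
proof -
  interpret N: prob_space N by (rule probN)
  interpret PS: product_sigma_finite "\<lambda>_::nat. P" by (rule PS)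
  let ?S = "{a. t < dist x a}"
  have card: "card ({1..m} - {k}) = m - 1" using k by auto
  have "(emeasure P ?S) ^ (m - 1) = (\<Prod>j\<in>{1..m} - {k}. \<integral>\<^sup>+a. indicator ?S a \<partial>P)"
    unfolding nn_integral_indicator[OF S_meas] prod_constant card ..
  also have "\<dots> = (\<integral>\<^sup>+v. (\<Prod>j\<in>{1..m} - {k}. indicator ?S (v j)) \<partial>PP ({1..m} - {k}))"
    by (rule PS.product_nn_integral_prod[symmetric]) auto
  also have "\<dots> \<le> hk k t"
    unfolding hk_def
  proof (intro nn_integral_mono)
    fix v assume v: "v \<in> space (PP ({1..m} - {k}))"
    show "(\<Prod>j\<in>{1..m} - {k}. indicator ?S (v j)) \<le> (\<integral>\<^sup>+z. (if \<psi> ((Dv v)(k := t)) z = k then 1 else 0) \<partial>N)"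
    proof (cases "\<forall>j\<in>{1..m} - {k}. t < dist x (v j)")
      case True
      then have "(\<integral>\<^sup>+z. (if \<psi> ((Dv v)(k := t)) z = k then 1 else 0) \<partial>N) = (\<integral>\<^sup>+z. 1 \<partial>N)"
        by (intro nn_integral_cong) (simp add: psi_strict_pt[OF k t])
      also have "\<dots> = 1" by (simp add: N.emeasure_space_1)
      finally show ?thesis using True by (simp add: indicator_def)
    next
      case False
      then obtain j where j: "j \<in> {1..m} - {k}" "\<not> t < dist x (v j)" by blast
      have "(\<Prod>j\<in>{1..m} - {k}. indicator ?S (v j)) = (0::ennreal)"
        by (rule prod_zero) (use j in \<open>auto intro!: bexI[of _ j]\<close>)
      then show ?thesis by (metis zero_le)
    qed
  qed
  finally show ?thesis .
qed

lemma tailQ: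
  "(\<integral>\<^sup>+w. indicator {a. t < dist x a} (fst w (\<psi> (Dv (fst w)) (snd w))) \<partial>(PP {1..m} \<Otimes>\<^sub>M N))
     \<le> (emeasure P {a. t < dist x a}) ^ m"
proof -
  interpret N: prob_space N by (rule probN)
  interpret PS: product_sigma_finite "\<lambda>_::nat. P" by (rule PS)
  let ?S = "{a. t < dist x a}"
  have "(\<integral>\<^sup>+w. indicator ?S (fst w (\<psi> (Dv (fst w)) (snd w))) \<partial>(PP {1..m} \<Otimes>\<^sub>M N))
     \<le> (\<integral>\<^sup>+w. (\<Prod>j\<in>{1..m}. indicator ?S (fst w j)) \<partial>(PP {1..m} \<Otimes>\<^sub>M N))"
  proof (intro nn_integral_mono)
    fix w assume w: "w \<in> space (PP {1..m} \<Otimes>\<^sub>M N)"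
    show "indicator ?S (fst w (\<psi> (Dv (fst w)) (snd w))) \<le> (\<Prod>j\<in>{1..m}. indicator ?S (fst w j) :: ennreal)"
    proof (cases "t < dist x (fst w (\<psi> (Dv (fst w)) (snd w)))")
      case True
      have "\<forall>j\<in>{1..m}. t < dist x (fst w j)"
      proof
        fix j assume j: "j \<in> {1..m}"
        have "Dv (fst w) (\<psi> (Dv (fst w)) (snd w)) \<le> Dv (fst w) j" by (rule psi_in(2)[OF w j])
        then show "t < dist x (fst w j)" using True j psi_in(1)[OF w] by (simp add: Dv_def)
      qed
      then show ?thesis by (simp add: indicator_def)
    qed simp
  qed
  also have "\<dots> = (\<integral>\<^sup>+v. \<integral>\<^sup>+z. (\<Prod>j\<in>{1..m}. indicator ?S (v j)) \<partial>N \<partial>PP {1..m})"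
  proof -
    have mm: "(\<lambda>w. \<Prod>j\<in>{1..m}. indicator ?S (fst w j) :: ennreal) \<in> borel_measurable (PP {1..m} \<Otimes>\<^sub>M N)"
      by measurable
    show ?thesis using N.nn_integral_fst[OF mm] by simp
  qed
  also have "\<dots> = (\<integral>\<^sup>+v. (\<Prod>j\<in>{1..m}. indicator ?S (v j)) \<partial>PP {1..m})"
    by (simp add: N.emeasure_space_1)
  also have "\<dots> = (\<Prod>j\<in>{1..m}. \<integral>\<^sup>+a. indicator ?S a \<partial>P)"
    by (rule PS.product_nn_integral_prod) auto
  also have "\<dots> = (emeasure P ?S) ^ m" by simp
  finally show ?thesis .
qed

lemma H_le: "H t \<le> of_nat m"
proof -
  have "H t \<le> (\<Sum>k\<in>{1..m}. 1)" unfolding H_def by (intro sum_mono hk_le1)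
  then show ?thesis by simp
qed

definition "Hr t = enn2real (H t)"

lemma H_eq: "H t = ennreal (Hr t)"
proof -
  have "H t < top" using H_le[of t] by (metis ennreal_of_nat_eq_real_of_nat ennreal_less_top order.strict_trans1)
  then show ?thesis unfolding Hr_def by simp
qed

lemma Hr_nonneg: "0 \<le> Hr t" unfolding Hr_def by simp

lemma Hr_le: "Hr t \<le> m"
  unfolding Hr_def using H_le[of t] by (intro enn2real_leI) (auto simp: ennreal_of_nat_eq_real_of_nat)

lemma Hr_mono: "0 \<le> t' \<Longrightarrow> t' \<le> t \<Longrightarrow> Hr t \<le> Hr t'"
proof -
  assume "0 \<le> t'" "t' \<le> t"
  then have "H t \<le> H t'" unfolding H_def by (intro sum_mono hk_mono) auto
  then show ?thesis using H_eq Hr_nonneg by (metis ennreal_le_iff)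
qed

lemma Hr_meas[measurable]: "(\<lambda>a. Hr (dist x a)) \<in> borel_measurable P"
  unfolding Hr_def by measurable

lemma Hr_lower:
  assumes t: "0 \<le> t"
  shows "m * (measure P {a. t < dist x a}) ^ (m - 1) \<le> Hr t"
proof -
  interpret P: prob_space P by (rule probP)
  have "(\<Sum>k\<in>{1..m}. (emeasure P {a. t < dist x a}) ^ (m - 1)) \<le> H t"
    unfolding H_def by (intro sum_mono hk_lower t) auto
  then have "ennreal (m * (measure P {a. t < dist x a}) ^ (m - 1)) \<le> ennreal (Hr t)"
    by (simp add: H_eq P.emeasure_eq_measure ennreal_power ennreal_mult ennreal_of_nat_eq_real_of_nat)
  then show ?thesis using Hr_nonneg by simp
qed

lemma conv:
  assumes L: "prob_space L" and g: "g \<in> borel_measurable L" and b: "\<And>w. w \<in> space L \<Longrightarrow> 0 \<le> g w \<and> g w \<le> B"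
  shows "(\<integral>\<^sup>+w. ennreal (g w) \<partial>L) = ennreal (\<integral>w. g w \<partial>L)" "0 \<le> (\<integral>w. g w \<partial>L)"
proof -
  interpret L: prob_space L by (rule L)
  have "integrable L g"
    by (rule L.integrable_const_bound[where B=B]) (use b g in auto)
  then show "(\<integral>\<^sup>+w. ennreal (g w) \<partial>L) = ennreal (\<integral>w. g w \<partial>L)"
    by (rule nn_integral_eq_integral) (use b in auto)
  show "0 \<le> (\<integral>w. g w \<partial>L)" by (rule integral_nonneg_AE) (use b in \<open>auto intro!: AE_I2\<close>)
qed

lemma g_meas:
  fixes \<phi> :: "'a \<Rightarrow> real"
  assumes \<phi>[measurable]: "\<phi> \<in> borel_measurable P"
  shows "(\<lambda>w. \<phi> (fst w (\<psi> (Dv (fst w)) (snd w)))) \<in> borel_measurable (PP {1..m} \<Otimes>\<^sub>M N)"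
proof -
  have m1[measurable]: "(\<lambda>w. \<psi> (Dv (fst w)) (snd w)) \<in> (PP {1..m} \<Otimes>\<^sub>M N) \<rightarrow>\<^sub>M count_space {1..m}"
    by (rule M1)
  show ?thesis
  proof (subst measurable_cong)
    fix w assume w: "w \<in> space (PP {1..m} \<Otimes>\<^sub>M N)"
    show "\<phi> (fst w (\<psi> (Dv (fst w)) (snd w))) = (\<Sum>k\<in>{1..m}. \<phi> (fst w k) * (if \<psi> (Dv (fst w)) (snd w) = k then 1 else 0))"
      using psi_in(1)[OF w] by (simp add: if_distrib[where f="\<lambda>y. _ * y"] sum.delta' cong: if_cong)
  next
    show "(\<lambda>w. \<Sum>k\<in>{1..m}. \<phi> (fst w k) * (if \<psi> (Dv (fst w)) (snd w) = k then 1 else 0)) \<in> borel_measurable (PP {1..m} \<Otimes>\<^sub>M N)"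
      by measurable
  qed
qed

lemma starR:
  assumes \<phi>[measurable]: "\<phi> \<in> borel_measurable P" and b: "\<And>a. 0 \<le> \<phi> a \<and> \<phi> a \<le> B"
  shows "(\<integral>w. \<phi> (fst w (\<psi> (Dv (fst w)) (snd w))) \<partial>(PP {1..m} \<Otimes>\<^sub>M N)) = (\<integral>a. \<phi> a * Hr (dist x a) \<partial>P)"
proof -
  have pQ: "prob_space (PP {1..m} \<Otimes>\<^sub>M N)" by (intro prob_space_pair probPP probN)
  have B0: "0 \<le> B" using b[of undefined] by linarith
  have m1[measurable]: "(\<lambda>w. \<psi> (Dv (fst w)) (snd w)) \<in> (PP {1..m} \<Otimes>\<^sub>M N) \<rightarrow>\<^sub>M count_space {1..m}"
    by (rule M1)
  have g1: "(\<lambda>w. \<phi> (fst w (\<psi> (Dv (fst w)) (snd w)))) \<in> borel_measurable (PP {1..m} \<Otimes>\<^sub>M N)"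
  proof (subst measurable_cong)
    fix w assume w: "w \<in> space (PP {1..m} \<Otimes>\<^sub>M N)"
    show "\<phi> (fst w (\<psi> (Dv (fst w)) (snd w))) = (\<Sum>k\<in>{1..m}. \<phi> (fst w k) * (if \<psi> (Dv (fst w)) (snd w) = k then 1 else 0))"
      using psi_in(1)[OF w] by (simp add: if_distrib[where f="\<lambda>y. _ * y"] sum.delta' cong: if_cong)
  next
    show "(\<lambda>w. \<Sum>k\<in>{1..m}. \<phi> (fst w k) * (if \<psi> (Dv (fst w)) (snd w) = k then 1 else 0)) \<in> borel_measurable (PP {1..m} \<Otimes>\<^sub>M N)"
      by measurable
  qed
  have "ennreal (\<integral>w. \<phi> (fst w (\<psi> (Dv (fst w)) (snd w))) \<partial>(PP {1..m} \<Otimes>\<^sub>M N))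
     = (\<integral>\<^sup>+w. ennreal (\<phi> (fst w (\<psi> (Dv (fst w)) (snd w)))) \<partial>(PP {1..m} \<Otimes>\<^sub>M N))"
    by (rule conv(1)[OF pQ g1, symmetric]) (use b in auto)
  also have "\<dots> = (\<integral>\<^sup>+a. ennreal (\<phi> a) * H (dist x a) \<partial>P)"
    by (rule starQ) measurable
  also have "\<dots> = (\<integral>\<^sup>+a. ennreal (\<phi> a * Hr (dist x a)) \<partial>P)"
    by (simp add: H_eq ennreal_mult b Hr_nonneg)
  also have "\<dots> = ennreal (\<integral>a. \<phi> a * Hr (dist x a) \<partial>P)"
    by (rule conv(1)[OF probP, where B="B * m"]) (use b Hr_nonneg Hr_le B0 in \<open>auto intro!: mult_mono\<close>)
  finally show ?thesis
    using conv(2)[OF pQ g1, of B] conv(2)[OF probP, of "\<lambda>a. \<phi> a * Hr (dist x a)" "B * m"] b Hr_nonneg Hr_le B0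
    by (auto intro!: mult_mono)
qed

lemma h1R: "(\<integral>a. Hr (dist x a) \<partial>P) = 1"
proof -
  have pQ: "prob_space (PP {1..m} \<Otimes>\<^sub>M N)" by (intro prob_space_pair probPP probN)
  have "(\<integral>w. (\<lambda>_. 1::real) (fst w (\<psi> (Dv (fst w)) (snd w))) \<partial>(PP {1..m} \<Otimes>\<^sub>M N)) = (\<integral>a. 1 * Hr (dist x a) \<partial>P)"
    by (rule starR[where B=1]) auto
  then show ?thesis using prob_space.prob_space[OF pQ] by simp
qed

lemma htailR: "(\<integral>a. indicator {a. r < dist x a} a * Hr (dist x a) \<partial>P) \<le> (measure P {a. r < dist x a}) ^ m"
proof -
  interpret P: prob_space P by (rule probP)
  let ?S = "{a. r < dist x a}"
  have "ennreal (\<integral>a. indicator ?S a * Hr (dist x a) \<partial>P) = (\<integral>\<^sup>+a. ennreal (indicator ?S a * Hr (dist x a)) \<partial>P)"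
    by (rule conv(1)[OF probP, where B="real m", symmetric]) (use Hr_nonneg Hr_le in \<open>auto simp: indicator_def\<close>)
  also have "\<dots> = (\<integral>\<^sup>+a. indicator ?S a * H (dist x a) \<partial>P)"
    by (intro nn_integral_cong) (simp add: H_eq ennreal_mult Hr_nonneg indicator_def)
  also have "\<dots> = (\<integral>\<^sup>+w. indicator ?S (fst w (\<psi> (Dv (fst w)) (snd w))) \<partial>(PP {1..m} \<Otimes>\<^sub>M N))"
    by (rule starQ[symmetric]) measurable
  also have "\<dots> \<le> (emeasure P ?S) ^ m" by (rule tailQ)
  also have "\<dots> = ennreal ((measure P ?S) ^ m)" by (simp add: P.emeasure_eq_measure ennreal_power)
  finally show ?thesis by (simp add: ennreal_le_iff)
qed

end

declare sum_of_bool_eq[simp del] sum_of_bool_mult_eq[simp del] sum_mult_of_bool_eq[simp del]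
locale ana =
  fixes P :: "'a::metric_space measure" and \<eta> :: "'a \<Rightarrow> real" and x :: 'a and C :: real
    and E :: "nat \<Rightarrow> real" and Hr :: "nat \<Rightarrow> real \<Rightarrow> real"
  assumes probP: "prob_space P" and setsP: "sets P = sets borel"
    and \<eta>meas: "\<eta> \<in> borel_measurable borel"
    and fC: "\<And>a. \<bar>\<eta> a - \<eta> x\<bar> \<le> C"
    and supp: "\<And>r. 0 < r \<Longrightarrow> 0 < measure P (cball x r)"
    and hE: "\<And>m. 1 \<le> m \<Longrightarrow> E m = (\<integral>a. \<bar>\<eta> a - \<eta> x\<bar> * Hr m (dist x a) \<partial>P)"
    and h1: "\<And>m. 1 \<le> m \<Longrightarrow> (\<integral>a. Hr m (dist x a) \<partial>P) = 1"
    and htail: "\<And>m r. 1 \<le> m \<Longrightarrow> (\<integral>a. indicator {a. r < dist x a} a * Hr m (dist x a) \<partial>P) \<le> (measure P {a. r < dist x a}) ^ m"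
    and hmono: "\<And>m t t'. 1 \<le> m \<Longrightarrow> 0 \<le> t' \<Longrightarrow> t' \<le> t \<Longrightarrow> Hr m t \<le> Hr m t'"
    and hbnd: "\<And>m t. 1 \<le> m \<Longrightarrow> 0 \<le> Hr m t \<and> Hr m t \<le> m"
    and hlow: "\<And>m t. 1 \<le> m \<Longrightarrow> 0 \<le> t \<Longrightarrow> m * (measure P {a. t < dist x a}) ^ (m - 1) \<le> Hr m t"
    and hmeas: "\<And>m. 1 \<le> m \<Longrightarrow> (\<lambda>a. Hr m (dist x a)) \<in> borel_measurable P"
begin

abbreviation "f a \<equiv> \<bar>\<eta> a - \<eta> x\<bar>"
abbreviation "F r \<equiv> measure P (cball x r)"

lemma spaceP[simp]: "space P = UNIV"
  using setsP by (metis sets_eq_imp_space_eq space_borel)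

lemma eta_meas[measurable]: "\<eta> \<in> borel_measurable P"
  by (subst measurable_cong_sets[OF setsP refl]) (rule \<eta>meas)

lemma f_meas[measurable]: "(\<lambda>a. \<bar>\<eta> a - \<eta> x\<bar>) \<in> borel_measurable P"
  by (subst measurable_cong_sets[OF setsP refl]) (use \<eta>meas in measurable)

lemma dist_meas[measurable]: "(\<lambda>a. dist x a) \<in> borel_measurable P"
  by (subst measurable_cong_sets[OF setsP refl])
     (intro borel_measurable_continuous_onI continuous_intros)

lemma C0: "0 \<le> C" using fC[of x] by simp

lemma f0: "0 \<le> f a" by simp

lemma intP:
  fixes g :: "'a \<Rightarrow> real"
  assumes g: "g \<in> borel_measurable P" and b: "\<And>a. \<bar>g a\<bar> \<le> B"
  shows "integrable P g"
proof -
  interpret P: prob_space P by (rule probP)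
  show ?thesis by (rule P.integrable_const_bound[where B=B]) (use g b in auto)
qed

lemma cball_sets[measurable]: "cball x r \<in> sets P"
  using setsP by simp

lemma downset:
  assumes e: "0 \<le> e" and Lb: "\<And>s. 0 < s \<Longrightarrow> s \<le> r0 \<Longrightarrow> (\<integral>a. indicator (cball x s) a * f a \<partial>P) \<le> e * F s"
    and S: "S \<subseteq> {0..r0}" and Sd: "\<And>u u'. u \<in> S \<Longrightarrow> 0 \<le> u' \<Longrightarrow> u' \<le> u \<Longrightarrow> u' \<in> S"
  shows "(\<integral>a. indicator S (dist x a) * f a \<partial>P) \<le> e * measure P {a. dist x a \<in> S}"
proof (cases "S = {}")
  case True then show ?thesis by simp
next
  case ne: False
  interpret P: prob_space P by (rule probP)
  define s where "s = Sup S"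
  have bdd: "bdd_above S" using S by (auto intro!: bdd_aboveI[of _ r0])
  have up: "u \<le> s" if "u \<in> S" for u using cSup_upper[OF that bdd] s_def by simp
  have sr0: "s \<le> r0" unfolding s_def using S ne by (intro cSup_least) auto
  have s0: "0 \<le> s" using ne up S by force
  show ?thesis
  proof (cases "s \<in> S")
    case True
    have eq: "indicator S (dist x a) = indicator (cball x s) a" for a
      using up Sd[OF True, of "dist x a"] by (auto simp: indicator_def)
    have eq2: "{a. dist x a \<in> S} = cball x s"
      using up Sd[OF True] by auto
    show ?thesis
    proof (cases "s = 0")
      case True
      have "(\<integral>a. indicator S (dist x a) * f a \<partial>P) = (\<integral>a. 0 \<partial>P)"
      proof (intro Bochner_Integration.integral_cong refl)
        fix a
        show "indicator S (dist x a) * f a = 0"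
        proof (cases "dist x a \<in> S")
          case True
          then have "dist x a \<le> 0" using up \<open>s = 0\<close> by force
          then have "a = x" by simp
          then show ?thesis by simp
        qed simp
      qed
      then show ?thesis using e by simp
    next
      case False
      then show ?thesis using Lb[of s] s0 sr0 by (simp add: eq eq2)
    qed
  next
    case False
    have spos: "0 < s"
    proof (rule ccontr)
      assume "\<not> 0 < s"
      then have "s = 0" using s0 by simp
      obtain u where "u \<in> S" using ne by auto
      then have "u = 0" using up S \<open>s = 0\<close> by force
      then show False using \<open>u \<in> S\<close> \<open>s = 0\<close> False by simp
    qed
    have eq: "dist x a \<in> S \<longleftrightarrow> dist x a < s" for a
    proof
      assume "dist x a \<in> S" then show "dist x a < s" using up False by (metis order_le_less)
    next
      assume "dist x a < s"
      then obtain u where "u \<in> S" "dist x a < u" using less_cSup_iff[OF ne bdd] s_def by auto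
      then show "dist x a \<in> S" using Sd by auto
    qed
    define sn where "sn n = s - s / (n + 2)" for n :: nat
    have sn_lt: "sn n < s" for n using spos by (simp add: sn_def)
    have sn_pos: "0 < sn n" for n using spos by (simp add: sn_def field_simps add_pos_nonneg)
    have sn_S: "sn n \<in> S" for n
    proof -
      have "\<exists>u\<in>S. sn n < u" using less_cSup_iff[OF ne bdd] s_def sn_lt by auto
      then obtain u where "u \<in> S" "sn n < u" by blast
      then show ?thesis using Sd sn_pos by (meson less_imp_le)
    qed
    have sn_lim: "sn \<longlonglongrightarrow> s"
    proof -
      have "filterlim (\<lambda>n::nat. real n + 2) at_top sequentially"
        using filterlim_tendsto_add_at_top[OF tendsto_const[of "2::real"] filterlim_real_sequentially]
        by (simp add: add.commute)
      then have "(\<lambda>n. s / (real n + 2)) \<longlonglongrightarrow> 0"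
        by (intro tendsto_divide_0[OF tendsto_const] filterlim_at_top_imp_at_infinity)
      moreover have "sn = (\<lambda>n. s - s / (real n + 2))" by (simp add: fun_eq_iff sn_def)
      ultimately show ?thesis using tendsto_diff[OF tendsto_const[of s]] by fastforce
    qed
    have ptw: "(\<lambda>n. indicator (cball x (sn n)) a) \<longlonglongrightarrow> (indicator {a. dist x a < s} a :: real)" for a
    proof (cases "dist x a < s")
      case True
      then have "eventually (\<lambda>n. dist x a < sn n) sequentially"
        using order_tendstoD(1)[OF sn_lim] by blast
      then have "eventually (\<lambda>n. indicator (cball x (sn n)) a = (indicator {a. dist x a < s} a :: real)) sequentially"
        by eventually_elim (use True in \<open>auto simp: indicator_def\<close>)
      then show ?thesis by (rule tendsto_eventually)
    next
      case False
      then have "indicator (cball x (sn n)) a = (indicator {a. dist x a < s} a :: real)" for n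
        using sn_lt[of n] by (auto simp: indicator_def)
      then show ?thesis by simp
    qed
    have lim1: "(\<lambda>n. \<integral>a. indicator (cball x (sn n)) a * f a \<partial>P) \<longlonglongrightarrow> (\<integral>a. indicator {a. dist x a < s} a * f a \<partial>P)"
    proof (rule integral_dominated_convergence[where w="\<lambda>_. C" and s="\<lambda>n a. indicator (cball x (sn n)) a * f a" and f="\<lambda>a. indicator {a. dist x a < s} a * f a"])
      show "AE a in P. (\<lambda>n. indicator (cball x (sn n)) a * f a) \<longlonglongrightarrow> indicator {a. dist x a < s} a * f a"
        by (intro AE_I2 tendsto_mult ptw tendsto_const)
      show "AE a in P. norm (indicator (cball x (sn n)) a * f a) \<le> C" for n
        using fC C0 by (intro AE_I2) (auto simp: indicator_def)
    qed (auto simp: setsP)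
    have lim2': "(\<lambda>n. \<integral>a. indicator (cball x (sn n)) a * (1::real) \<partial>P) \<longlonglongrightarrow> (\<integral>a. indicator {a. dist x a < s} a * 1 \<partial>P)"
    proof (rule integral_dominated_convergence[where w="\<lambda>_. 1" and s="\<lambda>n a. indicator (cball x (sn n)) a * (1::real)" and f="\<lambda>a. indicator {a. dist x a < s} a * (1::real)"])
      show "AE a in P. (\<lambda>n. indicator (cball x (sn n)) a * (1::real)) \<longlonglongrightarrow> indicator {a. dist x a < s} a * 1"
        by (intro AE_I2 tendsto_mult ptw tendsto_const)
      show "AE a in P. norm (indicator (cball x (sn n)) a * (1::real)) \<le> 1" for n
        by (intro AE_I2) (auto simp: indicator_def)
    qed (auto simp: setsP)
    then have lim2: "(\<lambda>n. F (sn n)) \<longlonglongrightarrow> measure P {a. dist x a < s}"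
      by simp
    have "(\<integral>a. indicator {a. dist x a < s} a * f a \<partial>P) \<le> e * measure P {a. dist x a < s}"
    proof (rule LIMSEQ_le[OF lim1 tendsto_mult[OF tendsto_const lim2]])
      show "\<exists>N. \<forall>n\<ge>N. (\<integral>a. indicator (cball x (sn n)) a * f a \<partial>P) \<le> e * F (sn n)"
        using Lb sn_pos sn_S S by (auto simp: subset_eq)
    qed
    moreover have "indicator S (dist x a) = (indicator {a. dist x a < s} a :: real)" for a
      using eq by (auto simp: indicator_def)
    moreover have "{a. dist x a \<in> S} = {a. dist x a < s}" using eq by auto
    ultimately show ?thesis by simp
  qed
qed

lemma count_lemma:
  fixes c h :: real and n :: nat
  assumes c: "0 < c" and h: "0 \<le> h" "h \<le> n * c"
  shows "c * (\<Sum>j\<in>{1..n}. if j * c \<le> h then 1 else 0) \<le> h"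
    and "h \<le> c + c * (\<Sum>j\<in>{1..n}. if j * c \<le> h then 1 else 0)"
proof -
  define k where "k = nat \<lfloor>h / c\<rfloor>"
  have hc: "0 \<le> h / c" using c h by simp
  have kle: "real k \<le> h / c" unfolding k_def using hc by (simp add: of_nat_nat)
  have klt: "h / c < real k + 1" unfolding k_def using hc by (simp add: of_nat_nat)
  have "h / c \<le> n" using c h by (simp add: field_simps)
  then have kn: "k \<le> n" using kle by linarith
  have set: "{j\<in>{1..n}. real j * c \<le> h} = {1..k}"
  proof (intro set_eqI iffI)
    fix j assume "j \<in> {j\<in>{1..n}. real j * c \<le> h}"
    then have "1 \<le> j" "real j \<le> h / c" using c by (auto simp: field_simps)
    then have "int j \<le> \<lfloor>h / c\<rfloor>" by (metis floor_mono floor_of_nat)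
    then show "j \<in> {1..k}" using \<open>1 \<le> j\<close> unfolding k_def by auto
  next
    fix j assume "j \<in> {1..k}"
    then have "1 \<le> j" "j \<le> k" by auto
    then have "real j \<le> h / c" using kle by linarith
    then show "j \<in> {j\<in>{1..n}. real j * c \<le> h}" using c kn \<open>1 \<le> j\<close> \<open>j \<le> k\<close> by (auto simp: field_simps)
  qed
  have sum: "(\<Sum>j\<in>{1..n}. if j * c \<le> h then 1 else 0 :: real) = real k"
  proof -
    have "(\<Sum>j\<in>{1..n}. if j * c \<le> h then 1 else 0 :: real) = (\<Sum>j\<in>{j\<in>{1..n}. real j * c \<le> h}. 1)"
      by (subst sum.inter_filter) auto
    also have "\<dots> = real k" unfolding set by simp
    finally show ?thesis .
  qed
  show "c * (\<Sum>j\<in>{1..n}. if j * c \<le> h then 1 else 0) \<le> h"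
    unfolding sum using kle c by (simp add: field_simps)
  show "h \<le> c + c * (\<Sum>j\<in>{1..n}. if j * c \<le> h then 1 else 0)"
    unfolding sum using klt c by (simp add: field_simps)
qed

lemma layer_n:
  fixes m n :: nat and r0 e :: real
  assumes m: "1 \<le> m" and e: "0 \<le> e"
    and Lb: "\<And>s. 0 < s \<Longrightarrow> s \<le> r0 \<Longrightarrow> (\<integral>a. indicator (cball x s) a * f a \<partial>P) \<le> e * F s"
    and n: "1 \<le> n"
  shows "(\<integral>a. f a * Hr m (dist x a) * indicator (cball x r0) a \<partial>P) \<le> C * (m / n) + e"
proof -
  note hm[measurable] = hmeas[OF m]
  define c where "c = real m / real n"
  have c: "0 < c" using m n by (simp add: c_def)
  have mnc: "real m = real n * c" using n by (simp add: c_def)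
  define S where "S j = {u. 0 \<le> u \<and> u \<le> r0 \<and> real j * c \<le> Hr m u}" for j :: nat
  have Smeas[measurable]: "(\<lambda>a. indicator (S j) (dist x a) :: real) \<in> borel_measurable P" for j
  proof -
    have "(\<lambda>a. indicator (S j) (dist x a) :: real) = indicator {a \<in> space P. 0 \<le> dist x a \<and> dist x a \<le> r0 \<and> real j * c \<le> Hr m (dist x a)}"
      by (auto simp: S_def indicator_def fun_eq_iff)
    also have "\<dots> \<in> borel_measurable P" by measurable
    finally show ?thesis .
  qed
  have Spred[measurable]: "Measurable.pred P (\<lambda>a. dist x a \<in> S j)" for j
    unfolding S_def by measurable
  define K where "K a = (\<Sum>j\<in>{1..n}. indicator (S j) (dist x a) :: real)" for a
  have K0: "0 \<le> K a" for a unfolding K_def by (intro sum_nonneg) auto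
  have Kcount: "K a = (\<Sum>j\<in>{1..n}. if j * c \<le> Hr m (dist x a) then 1 else 0)" if "dist x a \<le> r0" for a
    unfolding K_def using that by (intro sum.cong refl) (auto simp: S_def indicator_def)
  have Kout: "K a = 0" if "\<not> dist x a \<le> r0" for a
    unfolding K_def using that by (intro sum.neutral) (auto simp: S_def indicator_def)
  have hb: "0 \<le> Hr m t" "Hr m t \<le> n * c" for t using hbnd[OF m, of t] mnc by auto
  have P1: "f a * Hr m (dist x a) * indicator (cball x r0) a \<le> C * c + c * (\<Sum>j\<in>{1..n}. indicator (S j) (dist x a) * f a)" for a
  proof (cases "dist x a \<le> r0")
    case True
    have "Hr m (dist x a) \<le> c + c * K a"
      using count_lemma(2)[OF c hb] Kcount[OF True] by simp
    then have "f a * Hr m (dist x a) \<le> f a * (c + c * K a)" by (intro mult_left_mono) auto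
    also have "\<dots> = c * f a + c * (K a * f a)" by (simp add: algebra_simps)
    also have "\<dots> \<le> C * c + c * (K a * f a)" using fC[of a] c by (simp add: mult.commute mult_right_mono)
    also have "K a * f a = (\<Sum>j\<in>{1..n}. indicator (S j) (dist x a) * f a)"
      unfolding K_def by (rule sum_distrib_right)
    finally show ?thesis using True by (simp add: mult.commute)
  next
    case False
    then show ?thesis using c C0 by (auto intro!: sum_nonneg)
  qed
  have P2: "c * K a \<le> Hr m (dist x a)" for a
  proof (cases "dist x a \<le> r0")
    case True
    then show ?thesis using count_lemma(1)[OF c hb] Kcount[OF True] by simp
  next
    case False
    then show ?thesis using Kout[OF False] hb by simp
  qed
  have int_j: "integrable P (\<lambda>a. indicator (S j) (dist x a) * f a)" for j
    apply (rule intP[where B=C])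
     apply measurable
    using fC C0 by (auto simp: indicator_def)
  have Kn: "K a \<le> n" for a
  proof -
    have "K a \<le> (\<Sum>j\<in>{1..n}. (1::real))" unfolding K_def by (rule sum_mono) (simp add: indicator_def)
    then show ?thesis by simp
  qed
  have Kmeas: "K \<in> borel_measurable P"
    unfolding K_def[abs_def] by measurable
  have int_K: "integrable P K"
    by (rule intP[OF Kmeas, where B="real n"]) (use K0 Kn in auto)
  have ic: "integrable P (\<lambda>a. C * c)" by (rule intP[where B="\<bar>C*c\<bar>"]) auto
  have isum: "integrable P (\<lambda>a. \<Sum>j\<in>{1..n}. indicator (S j) (dist x a) * f a)"
    by (rule Bochner_Integration.integrable_sum) (rule int_j)
  have "(\<integral>a. f a * Hr m (dist x a) * indicator (cball x r0) a \<partial>P)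
      \<le> (\<integral>a. C * c + c * (\<Sum>j\<in>{1..n}. indicator (S j) (dist x a) * f a) \<partial>P)"
  proof (rule integral_mono')
    show "integrable P (\<lambda>a. C * c + c * (\<Sum>j\<in>{1..n}. indicator (S j) (dist x a) * f a))"
      by (intro Bochner_Integration.integrable_add[OF ic] integrable_mult_right isum)
    show "0 \<le> C * c + c * (\<Sum>j\<in>{1..n}. indicator (S j) (dist x a) * f a)" for a
      using C0 c by (auto intro!: sum_nonneg)
  qed (rule P1)
  also have "\<dots> = C * c + c * (\<Sum>j\<in>{1..n}. \<integral>a. indicator (S j) (dist x a) * f a \<partial>P)"
  proof -
    have "(\<integral>a. C * c + c * (\<Sum>j\<in>{1..n}. indicator (S j) (dist x a) * f a) \<partial>P)
       = (\<integral>a. C * c \<partial>P) + (\<integral>a. c * (\<Sum>j\<in>{1..n}. indicator (S j) (dist x a) * f a) \<partial>P)"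
      by (rule Bochner_Integration.integral_add[OF ic integrable_mult_right[OF isum]])
    also have "(\<integral>a. c * (\<Sum>j\<in>{1..n}. indicator (S j) (dist x a) * f a) \<partial>P)
       = c * (\<integral>a. (\<Sum>j\<in>{1..n}. indicator (S j) (dist x a) * f a) \<partial>P)"
      by (rule integral_mult_right_zero)
    also have "(\<integral>a. (\<Sum>j\<in>{1..n}. indicator (S j) (dist x a) * f a) \<partial>P)
       = (\<Sum>j\<in>{1..n}. \<integral>a. indicator (S j) (dist x a) * f a \<partial>P)"
      by (rule Bochner_Integration.integral_sum) (rule int_j)
    also have "(\<integral>a. C * c \<partial>P) = C * c"
      using prob_space.prob_space[OF probP] by simp
    finally show ?thesis .
  qed
  also have "\<dots> \<le> C * c + c * (\<Sum>j\<in>{1..n}. e * measure P {a. dist x a \<in> S j})"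
  proof -
    have "(\<integral>a. indicator (S j) (dist x a) * f a \<partial>P) \<le> e * measure P {a. dist x a \<in> S j}" for j
    proof (rule downset[OF e Lb])
      show "S j \<subseteq> {0..r0}" by (auto simp: S_def)
      show "\<And>u u'. u \<in> S j \<Longrightarrow> 0 \<le> u' \<Longrightarrow> u' \<le> u \<Longrightarrow> u' \<in> S j"
        using hmono[OF m] by (auto simp: S_def intro: order.trans)
    qed auto
    then show ?thesis using c by (auto intro!: sum_mono mult_left_mono)
  qed
  also have "\<dots> = C * c + e * (\<integral>a. c * K a \<partial>P)"
  proof -
    have meq: "measure P {a. dist x a \<in> S j} = (\<integral>a. indicator (S j) (dist x a) \<partial>P :: real)" for j
    proof -
      have "(\<integral>a. indicator (S j) (dist x a) \<partial>P) = (\<integral>a. indicator {a. dist x a \<in> S j} a \<partial>P :: real)"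
        by (intro Bochner_Integration.integral_cong) (auto simp: indicator_def)
      then show ?thesis by simp
    qed
    have intj1: "integrable P (\<lambda>a. indicator (S j) (dist x a) :: real)" for j
      by (rule intP[where B=1]) (auto simp: indicator_def)
    have sK: "(\<integral>a. K a \<partial>P) = (\<Sum>j\<in>{1..n}. measure P {a. dist x a \<in> S j})"
      unfolding K_def meq by (rule Bochner_Integration.integral_sum) (rule intj1)
    have "(\<integral>a. c * K a \<partial>P) = c * (\<integral>a. K a \<partial>P)" by (rule integral_mult_right_zero)
    then show ?thesis
      using sK by (simp add: sum_distrib_left[symmetric] algebra_simps)
  qed
  also have "\<dots> \<le> C * c + e * (\<integral>a. Hr m (dist x a) \<partial>P)"
  proof -
    have "(\<integral>a. c * K a \<partial>P) \<le> (\<integral>a. Hr m (dist x a) \<partial>P)"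
      by (rule integral_mono[OF _ intP[where B="real m"] P2]) (use int_K hbnd[OF m] in auto)
    then show ?thesis using e by (simp add: mult_left_mono)
  qed
  also have "\<dots> = C * (m / n) + e" using h1[OF m] by (simp add: c_def)
  finally show ?thesis .
qed

lemma layer:
  fixes m :: nat and r0 e :: real
  assumes m: "1 \<le> m" and e: "0 \<le> e"
    and Lb: "\<And>s. 0 < s \<Longrightarrow> s \<le> r0 \<Longrightarrow> (\<integral>a. indicator (cball x s) a * f a \<partial>P) \<le> e * F s"
  shows "(\<integral>a. f a * Hr m (dist x a) * indicator (cball x r0) a \<partial>P) \<le> e"
proof -
  have lim: "(\<lambda>n. (C * m) / real n + e) \<longlonglongrightarrow> 0 + e"
    by (intro tendsto_add lim_const_over_n tendsto_const)
  show ?thesis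
  proof (rule LIMSEQ_le_const[OF lim[simplified]])
    show "\<exists>N. \<forall>n\<ge>N. (\<integral>a. f a * Hr m (dist x a) * indicator (cball x r0) a \<partial>P) \<le> C * real m / real n + e"
      using layer_n[OF m e Lb] by (intro exI[of _ 1]) auto
  qed
qed

lemma compl_meas: "measure P {a. r < dist x a} = 1 - F r"
proof -
  interpret P: prob_space P by (rule probP)
  have "{a. r < dist x a} = space P - cball x r" by auto
  then show ?thesis using P.prob_compl[of "cball x r"] by simp
qed

lemma fwd:
  assumes L: "lebesgue_point P \<eta> x"
  shows "E \<longlonglongrightarrow> 0"
proof (rule LIMSEQ_I)
  fix \<epsilon> :: real assume \<epsilon>: "0 < \<epsilon>"
  define e where "e = \<epsilon> / 3"
  have e: "0 < e" using \<epsilon> by (simp add: e_def)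
  have "eventually (\<lambda>r. (\<integral>y. indicator (cball x r) y * f y \<partial>P) / F r < e) (at_right 0)"
    using order_tendstoD(2)[OF L[unfolded lebesgue_point_def] e] .
  then obtain b where b: "0 < b" "\<And>t. 0 < t \<Longrightarrow> t < b \<Longrightarrow> (\<integral>y. indicator (cball x t) y * f y \<partial>P) / F t < e"
    unfolding eventually_at_right_field by auto
  define r0 where "r0 = b / 2"
  have r0: "0 < r0" "r0 < b" using b by (auto simp: r0_def)
  have Lb: "(\<integral>a. indicator (cball x s) a * f a \<partial>P) \<le> e * F s" if "0 < s" "s \<le> r0" for s
  proof -
    have "(\<integral>y. indicator (cball x s) y * f y \<partial>P) / F s < e" using b(2)[of s] that r0 by auto
    then show ?thesis using supp[OF \<open>0 < s\<close>] by (simp add: divide_less_eq)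
  qed
  define q where "q = measure P {a. r0 < dist x a}"
  have q: "0 \<le> q" "q < 1" using supp[OF r0(1)] prob_space.prob_le_1[OF probP, of "cball x r0"] by (auto simp: q_def compl_meas)
  have "(\<lambda>m. C * q ^ m) \<longlonglongrightarrow> C * 0"
    by (intro tendsto_mult tendsto_const LIMSEQ_power_zero) (use q in auto)
  then obtain N where N: "\<And>m. m \<ge> N \<Longrightarrow> C * q ^ m < e"
    using order_tendstoD(2)[of _ "C * 0" sequentially e] e by (auto simp: eventually_sequentially)
  show "\<exists>no. \<forall>m\<ge>no. norm (E m - 0) < \<epsilon>"
  proof (intro exI[of _ "max N 1"] allI impI)
    fix m assume "max N 1 \<le> m"
    then have m: "1 \<le> m" "N \<le> m" by auto
    note hm[measurable] = hmeas[OF m(1)]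
    have int1: "integrable P (\<lambda>a. f a * Hr m (dist x a) * indicator (cball x r0) a)"
      by (rule intP[where B="C * m"]) (use fC hbnd[OF m(1)] C0 in \<open>auto simp: indicator_def abs_mult intro!: mult_mono\<close>)
    have int2: "integrable P (\<lambda>a. indicator {a. r0 < dist x a} a * Hr m (dist x a))"
      by (rule intP[where B="m"]) (use hbnd[OF m(1)] in \<open>auto simp: indicator_def\<close>)
    have int3: "integrable P (\<lambda>a. f a * Hr m (dist x a) * indicator {a. r0 < dist x a} a)"
      by (rule intP[where B="C * m"]) (use fC hbnd[OF m(1)] C0 in \<open>auto simp: indicator_def abs_mult intro!: mult_mono\<close>)
    have E0: "0 \<le> E m" unfolding hE[OF m(1)]
      by (rule integral_nonneg_AE) (use hbnd[OF m(1)] in auto)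
    have "E m = (\<integral>a. f a * Hr m (dist x a) * indicator (cball x r0) a + f a * Hr m (dist x a) * indicator {a. r0 < dist x a} a \<partial>P)"
      unfolding hE[OF m(1)] by (intro Bochner_Integration.integral_cong) (auto simp: indicator_def)
    also have "\<dots> = (\<integral>a. f a * Hr m (dist x a) * indicator (cball x r0) a \<partial>P) + (\<integral>a. f a * Hr m (dist x a) * indicator {a. r0 < dist x a} a \<partial>P)"
      by (rule Bochner_Integration.integral_add[OF int1 int3])
    also have "\<dots> \<le> e + C * q ^ m"
    proof (rule add_mono)
      show "(\<integral>a. f a * Hr m (dist x a) * indicator (cball x r0) a \<partial>P) \<le> e"
        by (rule layer[OF m(1) _ Lb]) (use e in auto)
      have "(\<integral>a. f a * Hr m (dist x a) * indicator {a. r0 < dist x a} a \<partial>P) \<le> (\<integral>a. C * (indicator {a. r0 < dist x a} a * Hr m (dist x a)) \<partial>P)"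
        by (rule integral_mono[OF int3]) (use int2 fC hbnd[OF m(1)] in \<open>auto simp: indicator_def intro!: mult_right_mono\<close>)
      also have "\<dots> = C * (\<integral>a. indicator {a. r0 < dist x a} a * Hr m (dist x a) \<partial>P)"
        by (rule integral_mult_right_zero)
      also have "\<dots> \<le> C * q ^ m"
        unfolding q_def by (rule mult_left_mono[OF htail[OF m(1)] C0])
      finally show "(\<integral>a. f a * Hr m (dist x a) * indicator {a. r0 < dist x a} a \<partial>P) \<le> C * q ^ m" .
    qed
    finally have "E m \<le> e + C * q ^ m" .
    then show "norm (E m - 0) < \<epsilon>" using N[OF m(2)] E0 by (simp add: e_def)
  qed
qed

lemma exp_ineq:
  fixes u :: real
  assumes u: "0 < u" "u \<le> 1/2"
  shows "exp (-2) / u \<le> real (nat \<lceil>1/u\<rceil>) * (1 - u) ^ (nat \<lceil>1/u\<rceil> - 1)"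
proof -
  define m where "m = nat \<lceil>1/u\<rceil>"
  have m1: "1 / u \<le> real m" unfolding m_def by linarith
  have "1 \<le> 1 / u" using u by simp
  then have "1 \<le> real m" using m1 by linarith
  then have mpos: "1 \<le> m" by simp
  have m2: "real (m - 1) \<le> 1 / u" using mpos unfolding m_def by (simp add: of_nat_diff) linarith
  have b1: "exp (-2 * u) \<le> 1 - u"
  proof -
    have "1 + 2 * u \<le> exp (2 * u)" by (rule exp_ge_add_one_self_aux) (use u in simp)
    then have "(1 + 2 * u) * (1 - u) \<le> exp (2 * u) * (1 - u)" by (rule mult_right_mono) (use u in simp)
    moreover have "0 \<le> u * (1 - 2 * u)" using u by simp
    then have "1 \<le> (1 + 2 * u) * (1 - u)" by (simp add: algebra_simps)
    ultimately have "1 \<le> exp (2 * u) * (1 - u)" by linarith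
    then show ?thesis by (simp add: exp_minus field_simps)
  qed
  have "exp (-2) \<le> exp (-2 * u * real (m - 1))"
    using m2 u by (simp add: field_simps)
  also have "\<dots> = exp (-2 * u) ^ (m - 1)" by (simp add: exp_of_nat_mult[symmetric] mult.commute mult.left_commute)
  also have "\<dots> \<le> (1 - u) ^ (m - 1)" by (rule power_mono[OF b1]) simp
  finally have "exp (-2) \<le> (1 - u) ^ (m - 1)" .
  then have "exp (-2) / u \<le> (1 - u) ^ (m - 1) / u" using u by (simp add: divide_right_mono)
  also have "\<dots> = (1 / u) * (1 - u) ^ (m - 1)" by simp
  also have "\<dots> \<le> real m * (1 - u) ^ (m - 1)" by (rule mult_right_mono[OF m1]) (use u in simp)
  finally show ?thesis unfolding m_def .
qed

lemma F_mono: "r \<le> r' \<Longrightarrow> F r \<le> F r'"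
  using prob_space.finite_measure[OF probP]
  by (intro finite_measure.finite_measure_mono) (auto simp: subset_eq)

lemma F_cont: "((\<lambda>r. F r) \<longlongrightarrow> F 0) (at_right 0)"
proof -
  interpret P: prob_space P by (rule probP)
  have lim: "(\<lambda>n. F (1 / Suc n)) \<longlonglongrightarrow> measure P (\<Inter>n. cball x (1 / Suc n))"
  proof (rule P.finite_Lim_measure_decseq)
    have "1 / real (Suc n) \<le> 1 / real (Suc m)" if "m \<le> n" for m n
      by (rule divide_left_mono) (use that in auto)
    then show "decseq (\<lambda>n. cball x (1 / real (Suc n)))"
      unfolding decseq_def by (auto simp: subset_eq) (meson order_trans)
  qed auto
  have "(\<Inter>n. cball x (1 / Suc n)) = cball x 0"
  proof (intro set_eqI iffI)
    fix y assume "y \<in> (\<Inter>n. cball x (1 / Suc n))"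
    then have "dist x y \<le> 1 / Suc n" for n by auto
    then have "dist x y \<le> 0"
      by (intro LIMSEQ_le_const[OF LIMSEQ_Suc[OF lim_const_over_n[of 1]]]) auto
    then show "y \<in> cball x 0" by simp
  qed auto
  with lim have lim: "(\<lambda>n. F (1 / Suc n)) \<longlonglongrightarrow> F 0" by simp
  show ?thesis
  proof (rule order_tendstoI)
    fix a assume "a < F 0"
    then show "eventually (\<lambda>r. a < F r) (at_right 0)"
      unfolding eventually_at_right_field
    proof (intro exI[of _ 1] conjI allI impI)
      fix y :: real assume "0 < y"
      then show "a < F y" using F_mono[of 0 y] \<open>a < F 0\<close> by linarith
    qed simp
  next
    fix a assume "F 0 < a"
    then obtain n where n: "F (1 / Suc n) < a"
      using order_tendstoD(2)[OF lim] by (auto simp: eventually_sequentially)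
    show "eventually (\<lambda>r. F r < a) (at_right 0)"
      unfolding eventually_at_right_field
    proof (intro exI[of _ "1 / Suc n"] conjI allI impI)
      fix y :: real assume "0 < y" "y < 1 / Suc n"
      then show "F y < a" using F_mono[of y "1 / Suc n"] n by linarith
    qed simp
  qed
qed

lemma J_bound: "(\<integral>y. indicator (cball x r) y * f y \<partial>P) \<le> C * (F r - F 0)" if "0 \<le> r"
proof -
  have i1: "integrable P (\<lambda>y. C * (indicator (cball x r) y - indicator (cball x 0) y))"
    apply (rule intP[where B="\<bar>C\<bar>"])
     apply measurable
    by (auto simp: indicator_def abs_mult)
  have "(\<integral>y. indicator (cball x r) y * f y \<partial>P) \<le> (\<integral>y. C * (indicator (cball x r) y - indicator (cball x 0) y) \<partial>P)"
  proof (rule integral_mono'[OF i1])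
    fix y
    show "indicator (cball x r) y * f y \<le> C * (indicator (cball x r) y - indicator (cball x 0) y)"
      using fC[of y] C0 that by (cases "y = x") (auto simp: indicator_def)
    show "0 \<le> C * (indicator (cball x r) y - indicator (cball x 0) y)"
      using C0 that by (auto simp: indicator_def)
  qed
  also have "\<dots> = C * (F r - F 0)"
  proof -
    have a: "integrable P (indicator (cball x r) :: 'a \<Rightarrow> real)"
      by (intro intP[where B=1] borel_measurable_indicator cball_sets) (auto simp: indicator_def)
    have b: "integrable P (indicator (cball x 0) :: 'a \<Rightarrow> real)"
      by (intro intP[where B=1] borel_measurable_indicator cball_sets) (auto simp: indicator_def)
    have "(\<integral>y. indicator (cball x r) y - indicator (cball x 0) y \<partial>P) = F r - F 0"
      using Bochner_Integration.integral_diff[OF a b] by simp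
    then show ?thesis by (simp del: cball_trivial)
  qed
  finally show ?thesis .
qed

lemma J_nonneg: "0 \<le> (\<integral>y. indicator (cball x r) y * f y \<partial>P)"
  by (rule integral_nonneg_AE) (auto simp: indicator_def)

lemma F0: "0 \<le> F r" by simp

lemma key_lower:
  assumes r: "0 < r" and u: "F r \<le> 1/2"
  shows "(\<integral>y. indicator (cball x r) y * f y \<partial>P) / F r \<le> exp 2 * E (nat \<lceil>1 / F r\<rceil>)"
proof -
  define u where "u = F r"
  have u0: "0 < u" using supp[OF r] by (simp add: u_def)
  define m where "m = nat \<lceil>1 / u\<rceil>"
  have "1 \<le> 1 / u" using u0 u by (simp add: u_def)
  then have m1: "1 \<le> m" unfolding m_def by linarith
  note hm[measurable] = hmeas[OF m1]
  define J where "J = (\<integral>y. indicator (cball x r) y * f y \<partial>P)"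
  have J0: "0 \<le> J" unfolding J_def by (rule J_nonneg)
  define K where "K = real m * (1 - u) ^ (m - 1)"
  have K0: "0 \<le> K" using u unfolding K_def u_def by simp
  have "(\<integral>y. K * (indicator (cball x r) y * f y) \<partial>P) \<le> (\<integral>y. f y * Hr m (dist x y) \<partial>P)"
  proof (rule integral_mono')
    show "integrable P (\<lambda>y. f y * Hr m (dist x y))"
      by (rule intP[where B="C * m"]) (use fC hbnd[OF m1] C0 in \<open>auto simp: abs_mult intro!: mult_mono\<close>)
    fix y
    show "0 \<le> f y * Hr m (dist x y)" using hbnd[OF m1] by simp
    show "K * (indicator (cball x r) y * f y) \<le> f y * Hr m (dist x y)"
    proof (cases "y \<in> cball x r")
      case True
      then have d: "dist x y \<le> r" by simp
      have "1 - u \<le> measure P {a. dist x y < dist x a}"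
        using F_mono[OF d] by (simp add: compl_meas u_def)
      then have "(1 - u) ^ (m - 1) \<le> (measure P {a. dist x y < dist x a}) ^ (m - 1)"
        by (rule power_mono) (use u in \<open>simp add: u_def\<close>)
      then have "K \<le> Hr m (dist x y)"
        using hlow[OF m1, of "dist x y"] unfolding K_def by (meson mult_left_mono of_nat_0_le_iff order_trans zero_le_dist)
      then show ?thesis using True by (simp add: mult.commute[of "f y"] mult_right_mono)
    next
      case False
      then show ?thesis using hbnd[OF m1] by simp
    qed
  qed
  then have "K * J \<le> E m" unfolding J_def hE[OF m1] by simp
  moreover have "exp (-2) / u \<le> K" unfolding K_def m_def by (rule exp_ineq[OF u0]) (use u in \<open>simp add: u_def\<close>)
  ultimately have "exp (-2) / u * J \<le> E m" using J0 by (meson mult_right_mono order_trans)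
  then have "J / u \<le> exp 2 * E m" using u0 by (simp add: exp_minus field_simps)
  then show ?thesis unfolding J_def u_def m_def .
qed

lemma bwd:
  assumes lim: "E \<longlonglongrightarrow> 0"
  shows "lebesgue_point P \<eta> x"
  unfolding lebesgue_point_def
proof (cases "0 < F 0")
  case True
  have up: "((\<lambda>r. C * (F r - F 0) / F 0) \<longlongrightarrow> C * (F 0 - F 0) / F 0) (at_right 0)"
    by (intro tendsto_intros F_cont) (use True in simp)
  have up0: "((\<lambda>r. C * (F r - F 0) / F 0) \<longlongrightarrow> 0) (at_right 0)"
    using up by simp
  show "((\<lambda>r. (\<integral>y. indicator (cball x r) y * f y \<partial>P) / F r) \<longlongrightarrow> 0) (at_right 0)"
  proof (rule tendsto_sandwich[OF _ _ tendsto_const up0])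
    show "eventually (\<lambda>r. 0 \<le> (\<integral>y. indicator (cball x r) y * f y \<partial>P) / F r) (at_right 0)"
      using J_nonneg by (intro always_eventually allI divide_nonneg_nonneg) auto
    show "eventually (\<lambda>r. (\<integral>y. indicator (cball x r) y * f y \<partial>P) / F r \<le> C * (F r - F 0) / F 0) (at_right 0)"
    proof (rule eventually_at_rightI[of 0 1])
      fix r :: real assume "r \<in> {0<..<1}"
      then have r: "0 < r" by simp
      have Fr: "F 0 \<le> F r" using F_mono[of 0 r] r by simp
      have "(\<integral>y. indicator (cball x r) y * f y \<partial>P) / F r \<le> (\<integral>y. indicator (cball x r) y * f y \<partial>P) / F 0"
        using True Fr J_nonneg by (intro divide_left_mono) auto
      also have "\<dots> \<le> C * (F r - F 0) / F 0"
        using J_bound[of r] r True by (intro divide_right_mono) auto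
      finally show "(\<integral>y. indicator (cball x r) y * f y \<partial>P) / F r \<le> C * (F r - F 0) / F 0" .
    qed simp
  qed
next
  case False
  then have F00: "F 0 = 0" using F0[of 0] by linarith
  have Flim: "((\<lambda>r. F r) \<longlongrightarrow> 0) (at_right 0)" using F_cont F00 by simp
  define mr where "mr r = nat \<lceil>1 / F r\<rceil>" for r
  have pos: "eventually (\<lambda>r. 0 < r) (at_right (0::real))"
    unfolding eventually_at_right_field by (intro exI[of _ 1]) auto
  have fl: "filterlim mr at_top (at_right 0)"
    unfolding filterlim_at_top
  proof
    fix Z :: nat
    have "eventually (\<lambda>r. F r < 1 / (real Z + 1)) (at_right 0)"
      by (rule order_tendstoD(2)[OF Flim]) simp
    then show "eventually (\<lambda>r. Z \<le> mr r) (at_right 0)"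
      using pos
    proof eventually_elim
      case (elim r)
      have Fp: "0 < F r" using supp[OF elim(2)] .
      then have "real Z + 1 < 1 / F r" using elim(1) by (simp add: field_simps)
      then show ?case unfolding mr_def by linarith
    qed
  qed
  have lim2': "((\<lambda>r. exp 2 * E (mr r)) \<longlongrightarrow> exp 2 * 0) (at_right 0)"
    by (intro tendsto_mult tendsto_const filterlim_compose[OF lim fl])
  have lim2: "((\<lambda>r. exp 2 * E (mr r)) \<longlongrightarrow> 0) (at_right 0)"
    using lim2' by simp
  show "((\<lambda>r. (\<integral>y. indicator (cball x r) y * f y \<partial>P) / F r) \<longlongrightarrow> 0) (at_right 0)"
  proof (rule tendsto_sandwich[OF _ _ tendsto_const lim2])
    show "eventually (\<lambda>r. 0 \<le> (\<integral>y. indicator (cball x r) y * f y \<partial>P) / F r) (at_right 0)"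
      using J_nonneg by (intro always_eventually allI divide_nonneg_nonneg) auto
    have "eventually (\<lambda>r. F r < 1 / 2) (at_right 0)"
      by (rule order_tendstoD(2)[OF Flim]) simp
    then show "eventually (\<lambda>r. (\<integral>y. indicator (cball x r) y * f y \<partial>P) / F r \<le> exp 2 * E (mr r)) (at_right 0)"
      using pos
    proof eventually_elim
      case (elim r)
      then show ?case unfolding mr_def by (intro key_lower) auto
    qed
  qed
qed

lemma main: "lebesgue_point P \<eta> x \<longleftrightarrow> E \<longlonglongrightarrow> 0"
  using fwd bwd by blast

end

lemma (in prob_space) indep_set_sym: "indep_set A B \<Longrightarrow> indep_set B A"
  unfolding indep_sets2_eq by (metis Int_commute mult.commute)

lemma (in prob_space) joint_indep:
  assumes X: "random_variable S X" and Y: "random_variable T Y"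
    and ind: "indep_set (sigma_sets (space M) {X -` A \<inter> space M | A. A \<in> sets S})
                        (sigma_sets (space M) {Y -` A \<inter> space M | A. A \<in> sets T})"
  shows "distr M S X \<Otimes>\<^sub>M distr M T Y = distr M (S \<Otimes>\<^sub>M T) (\<lambda>x. (X x, Y x))"
proof -
  have XY: "random_variable (S \<Otimes>\<^sub>M T) (\<lambda>x. (X x, Y x))" by (rule measurable_Pair[OF X Y])
  interpret PX: prob_space "distr M S X" by (rule prob_space_distr) fact
  interpret PY: prob_space "distr M T Y" by (rule prob_space_distr) fact
  interpret PXY: pair_prob_space "distr M S X" "distr M T Y" ..
  show ?thesis
  proof (rule pair_measure_eqI)
    show "sigma_finite_measure (distr M S X)" ..
    show "sigma_finite_measure (distr M T Y)" ..
    fix A B assume A: "A \<in> sets (distr M S X)" and B: "B \<in> sets (distr M T Y)"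
    have "emeasure (distr M (S \<Otimes>\<^sub>M T) (\<lambda>x. (X x, Y x))) (A \<times> B) = emeasure M ((\<lambda>x. (X x, Y x)) -` (A \<times> B) \<inter> space M)"
      using A B by (intro emeasure_distr[OF XY]) auto
    also have "(\<lambda>x. (X x, Y x)) -` (A \<times> B) \<inter> space M = (X -` A \<inter> space M) \<inter> (Y -` B \<inter> space M)" by auto
    also have "emeasure M \<dots> = emeasure M (X -` A \<inter> space M) * emeasure M (Y -` B \<inter> space M)"
    proof -
      have a: "X -` A \<inter> space M \<in> sigma_sets (space M) {X -` A \<inter> space M | A. A \<in> sets S}"
        using A by (intro sigma_sets.Basic) auto
      have b: "Y -` B \<inter> space M \<in> sigma_sets (space M) {Y -` A \<inter> space M | A. A \<in> sets T}"
        using B by (intro sigma_sets.Basic) auto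
      have "prob ((X -` A \<inter> space M) \<inter> (Y -` B \<inter> space M)) = prob (X -` A \<inter> space M) * prob (Y -` B \<inter> space M)"
        using ind[unfolded indep_sets2_eq] a b by blast
      then show ?thesis by (simp add: emeasure_eq_measure measure_nonneg ennreal_mult)
    qed
    also have "\<dots> = emeasure (distr M S X) A * emeasure (distr M T Y) B"
      using X Y A B by (simp add: emeasure_distr)
    finally show "emeasure (distr M S X) A * emeasure (distr M T Y) B = emeasure (distr M (S \<Otimes>\<^sub>M T) (\<lambda>x. (X x, Y x))) (A \<times> B)"
      by simp
  qed simp
qed

theorem mainTheorem12:
  fixes M :: "'w measure" and X :: "nat \<Rightarrow> 'w \<Rightarrow> 'a::metric_space"
    and \<eta> :: "'a \<Rightarrow> real" and x :: 'a
    and Z :: "nat \<Rightarrow> 'z measure" and \<Theta> :: "nat \<Rightarrow> 'w \<Rightarrow> 'z"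
    and \<psi> :: "nat \<Rightarrow> (nat \<Rightarrow> real) \<Rightarrow> 'z \<Rightarrow> nat"
  assumes "prob_space M"
    and "prob_space.indep_vars M (\<lambda>_. borel) X UNIV"
    and "\<And>i. distr M borel (X i) = distr M borel (X 0)"
    and "in_support (distr M borel (X 0)) x"
    and "\<eta> \<in> borel_measurable borel" and "bounded (range \<eta>)"
    and "isimin M X Z \<Theta> \<psi>"
  shows "lebesgue_point (distr M borel (X 0)) \<eta> x \<longleftrightarrow>
         (\<lambda>m. \<integral>\<omega>. \<bar>\<eta> (nn_point X \<Theta> \<psi> x m \<omega>) - \<eta> x\<bar> \<partial>M) \<longlonglongrightarrow> 0"
proof -
  interpret M: prob_space M by (rule assms(1))
  define P where "P = distr M borel (X 0)"
  have Xmeas[measurable]: "X i \<in> M \<rightarrow>\<^sub>M borel" for i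
    using conjunct1[OF assms(2)[unfolded M.indep_vars_def2]] by simp
  have probP: "prob_space P" unfolding P_def by (rule M.prob_space_distr) simp
  have setsP: "sets P = sets borel" unfolding P_def by simp
  obtain B where B: "\<And>a. \<bar>\<eta> a\<bar> \<le> B" using assms(6) unfolding bounded_iff by auto
  have fC: "\<bar>\<eta> a - \<eta> x\<bar> \<le> 2 * B" for a using B[of a] B[of x] by linarith
  have supp: "0 < measure P (cball x r)" if "0 < r" for r
    using assms(4) that unfolding in_support_def P_def by auto
  have iso: "\<Theta> m \<in> M \<rightarrow>\<^sub>M Z m \<and>
       M.indep_set
         (sigma_sets (space M) {\<Theta> m -` A \<inter> space M | A. A \<in> sets (Z m)})
         (sigma_sets (space M) {(\<lambda>\<omega>. \<lambda>i\<in>{1..m}. X i \<omega>) -` A \<inter> space M | A.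
                                  A \<in> sets (PiM {1..m} (\<lambda>_. (borel :: 'a measure)))}) \<and>
       (\<lambda>(r, z). \<psi> m r z) \<in>
          (PiM {1..m} (\<lambda>_. restrict_space borel {0::real..}) \<Otimes>\<^sub>M Z m) \<rightarrow>\<^sub>M count_space {1..m} \<and>
       (\<forall>r \<in> space (PiM {1..m} (\<lambda>_. restrict_space borel {0::real..})). \<forall>z \<in> space (Z m).
          \<psi> m r z \<in> {1..m} \<and> (\<forall>k\<in>{1..m}. r (\<psi> m r z) \<le> r k))" if "1 \<le> m" for m
    using assms(7)[unfolded isimin_def, rule_format, OF that] .
  define N where "N m = distr M (Z m) (\<Theta> m)" for m
  have nns: "nnset P (N m) m (\<psi> m)" if m: "1 \<le> m" for m
  proof (rule nnset.intro)
    show "prob_space P" by (rule probP)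
    show "sets P = sets borel" by (rule setsP)
    show "prob_space (N m)" unfolding N_def by (rule M.prob_space_distr) (rule conjunct1[OF iso[OF m]])
    show "1 \<le> m" by (rule m)
    have sN: "sets (N m) = sets (Z m)" by (simp add: N_def)
    show "(\<lambda>(r, z). \<psi> m r z) \<in> (PiM {1..m} (\<lambda>_. restrict_space borel {0::real..}) \<Otimes>\<^sub>M N m) \<rightarrow>\<^sub>M count_space {1..m}"
      by (subst measurable_cong_sets[OF sets_pair_measure_cong[OF refl sN] refl]) (rule conjunct1[OF conjunct2[OF conjunct2[OF iso[OF m]]]])
    fix r z assume rz: "r \<in> space (PiM {1..m} (\<lambda>_. restrict_space borel {0::real..}))" "z \<in> space (N m)"
    have z: "z \<in> space (Z m)" using rz(2) by (simp add: N_def)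
    show "\<psi> m r z \<in> {1..m} \<and> (\<forall>k\<in>{1..m}. r (\<psi> m r z) \<le> r k)"
      using conjunct2[OF conjunct2[OF conjunct2[OF iso[OF m]]]] rz(1) z by blast
  qed
  have etaP[measurable]: "\<eta> \<in> borel_measurable P"
    by (subst measurable_cong_sets[OF setsP refl]) (rule assms(5))
  define HH where "HH m t = nnset.Hr P (N m) x m (\<psi> m) t" for m t
  define E where "E m = (\<integral>\<omega>. \<bar>\<eta> (nn_point X \<Theta> \<psi> x m \<omega>) - \<eta> x\<bar> \<partial>M)" for m
  have Eeq: "E m = (\<integral>a. \<bar>\<eta> a - \<eta> x\<bar> * HH m (dist x a) \<partial>P)" if m: "1 \<le> m" for m
  proof -
    interpret nnset P "N m" x m "\<psi> m" by (rule nns[OF m])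
    define V where "V = (\<lambda>\<omega>. \<lambda>i\<in>{1..m}. X i \<omega>)"
    have Vm: "V \<in> M \<rightarrow>\<^sub>M PiM {1..m} (\<lambda>_. borel)" unfolding V_def by measurable
    have \<Theta>m: "\<Theta> m \<in> M \<rightarrow>\<^sub>M Z m" by (rule conjunct1[OF iso[OF m]])
    have law1: "distr M (PiM {1..m} (\<lambda>_. borel)) V = PiM {1..m} (\<lambda>_. P)"
    proof -
      have "M.indep_vars (\<lambda>_. borel) X {1..m}" by (rule M.indep_vars_subset[OF assms(2)]) auto
      then have "distr M (PiM {1..m} (\<lambda>_. borel)) (\<lambda>\<omega>. \<lambda>i\<in>{1..m}. X i \<omega>) = PiM {1..m} (\<lambda>i. distr M borel (X i))"
        using M.indep_vars_iff_distr_eq_PiM'[where I="{1..m}" and M'="\<lambda>_. borel" and X=X] m by auto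
      also have "\<dots> = PiM {1..m} (\<lambda>_. P)" unfolding P_def by (intro PiM_cong refl assms(3))
      finally show ?thesis unfolding V_def .
    qed
    have law: "distr M (PiM {1..m} (\<lambda>_. borel) \<Otimes>\<^sub>M Z m) (\<lambda>\<omega>. (V \<omega>, \<Theta> m \<omega>)) = PiM {1..m} (\<lambda>_. P) \<Otimes>\<^sub>M N m"
    proof -
      have "distr M (PiM {1..m} (\<lambda>_. borel)) V \<Otimes>\<^sub>M distr M (Z m) (\<Theta> m) = distr M (PiM {1..m} (\<lambda>_. borel) \<Otimes>\<^sub>M Z m) (\<lambda>\<omega>. (V \<omega>, \<Theta> m \<omega>))"
        by (rule M.joint_indep[OF Vm \<Theta>m]) (use M.indep_set_sym[OF conjunct1[OF conjunct2[OF iso[OF m]]]] in \<open>simp add: V_def\<close>)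
      then show ?thesis using law1 by (simp add: N_def)
    qed
    have sQ: "sets (PiM {1..m} (\<lambda>_. P) \<Otimes>\<^sub>M N m) = sets (PiM {1..m} (\<lambda>_. borel) \<Otimes>\<^sub>M Z m)"
      by (intro sets_pair_measure_cong sets_PiM_cong) (auto simp: setsP N_def)
    have law': "distr M (PiM {1..m} (\<lambda>_. P) \<Otimes>\<^sub>M N m) (\<lambda>\<omega>. (V \<omega>, \<Theta> m \<omega>)) = PiM {1..m} (\<lambda>_. P) \<Otimes>\<^sub>M N m"
    proof -
      have "distr M (PiM {1..m} (\<lambda>_. P) \<Otimes>\<^sub>M N m) (\<lambda>\<omega>. (V \<omega>, \<Theta> m \<omega>)) = distr M (PiM {1..m} (\<lambda>_. borel) \<Otimes>\<^sub>M Z m) (\<lambda>\<omega>. (V \<omega>, \<Theta> m \<omega>))"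
        by (rule distr_cong[OF refl sQ]) (rule refl)
      then show ?thesis using law by (rule trans)
    qed
    have T: "(\<lambda>\<omega>. (V \<omega>, \<Theta> m \<omega>)) \<in> M \<rightarrow>\<^sub>M (PiM {1..m} (\<lambda>_. P) \<Otimes>\<^sub>M N m)"
      by (subst measurable_cong_sets[OF refl sQ]) (intro measurable_Pair Vm \<Theta>m)
    have gm: "(\<lambda>w. \<bar>\<eta> (fst w (\<psi> m (Dv (fst w)) (snd w))) - \<eta> x\<bar>) \<in> borel_measurable (PiM {1..m} (\<lambda>_. P) \<Otimes>\<^sub>M N m)"
      by (rule g_meas) measurable
    have "E m = (\<integral>\<omega>. (\<lambda>w. \<bar>\<eta> (fst w (\<psi> m (Dv (fst w)) (snd w))) - \<eta> x\<bar>) (V \<omega>, \<Theta> m \<omega>) \<partial>M)"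
      unfolding E_def
    proof (intro Bochner_Integration.integral_cong refl)
      fix \<omega> assume \<omega>: "\<omega> \<in> space M"
      have DV: "Dv (V \<omega>) = (\<lambda>i\<in>{1..m}. dist x (X i \<omega>))"
        by (auto simp: Dv_def V_def fun_eq_iff)
      have z: "\<Theta> m \<omega> \<in> space (Z m)" using \<Theta>m \<omega> by (rule measurable_space)
      have k: "\<psi> m (Dv (V \<omega>)) (\<Theta> m \<omega>) \<in> {1..m}"
        using conjunct2[OF conjunct2[OF conjunct2[OF iso[OF m]]]] Dv_space z by blast
      have nn: "nn_point X \<Theta> \<psi> x m \<omega> = X (\<psi> m (Dv (V \<omega>)) (\<Theta> m \<omega>)) \<omega>"
        by (simp only: nn_point_def DV)
      have vk: "V \<omega> (\<psi> m (Dv (V \<omega>)) (\<Theta> m \<omega>)) = X (\<psi> m (Dv (V \<omega>)) (\<Theta> m \<omega>)) \<omega>"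
        using k unfolding V_def by (simp only: restrict_apply') 
      show "\<bar>\<eta> (nn_point X \<Theta> \<psi> x m \<omega>) - \<eta> x\<bar> = (\<lambda>w. \<bar>\<eta> (fst w (\<psi> m (Dv (fst w)) (snd w))) - \<eta> x\<bar>) (V \<omega>, \<Theta> m \<omega>)"
        by (simp only: nn vk fst_conv snd_conv)
    qed
    also have "\<dots> = (\<integral>w. \<bar>\<eta> (fst w (\<psi> m (Dv (fst w)) (snd w))) - \<eta> x\<bar> \<partial>(distr M (PiM {1..m} (\<lambda>_. P) \<Otimes>\<^sub>M N m) (\<lambda>\<omega>. (V \<omega>, \<Theta> m \<omega>))))"
      by (rule integral_distr[OF T gm, symmetric])
    also have "\<dots> = (\<integral>w. \<bar>\<eta> (fst w (\<psi> m (Dv (fst w)) (snd w))) - \<eta> x\<bar> \<partial>(PiM {1..m} (\<lambda>_. P) \<Otimes>\<^sub>M N m))"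
      by (simp only: law')
    also have "\<dots> = (\<integral>a. \<bar>\<eta> a - \<eta> x\<bar> * Hr (dist x a) \<partial>P)"
      by (rule starR[where B="2 * B"]) (use fC in auto)
    finally show ?thesis unfolding HH_def .
  qed
  interpret A: ana P \<eta> x "2 * B" E HH
  proof (rule ana.intro)
    show "prob_space P" by (rule probP)
    show "sets P = sets borel" by (rule setsP)
    show "\<eta> \<in> borel_measurable borel" by (rule assms(5))
    show "\<And>a. \<bar>\<eta> a - \<eta> x\<bar> \<le> 2 * B" by (rule fC)
    show "\<And>r. 0 < r \<Longrightarrow> 0 < measure P (cball x r)" by (rule supp)
    show "\<And>m. 1 \<le> m \<Longrightarrow> E m = (\<integral>a. \<bar>\<eta> a - \<eta> x\<bar> * HH m (dist x a) \<partial>P)" by (rule Eeq)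
    show "\<And>m. 1 \<le> m \<Longrightarrow> (\<integral>a. HH m (dist x a) \<partial>P) = 1"
      unfolding HH_def by (rule nnset.h1R[OF nns])
    show "\<And>m r. 1 \<le> m \<Longrightarrow> (\<integral>a. indicator {a. r < dist x a} a * HH m (dist x a) \<partial>P) \<le> (measure P {a. r < dist x a}) ^ m"
      unfolding HH_def by (rule nnset.htailR[OF nns])
    show "\<And>m t t'. 1 \<le> m \<Longrightarrow> 0 \<le> t' \<Longrightarrow> t' \<le> t \<Longrightarrow> HH m t \<le> HH m t'"
      unfolding HH_def by (rule nnset.Hr_mono[OF nns])
    show "\<And>m t. 1 \<le> m \<Longrightarrow> 0 \<le> HH m t \<and> HH m t \<le> m"
      unfolding HH_def using nnset.Hr_nonneg[OF nns] nnset.Hr_le[OF nns] by blast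
    show "\<And>m t. 1 \<le> m \<Longrightarrow> 0 \<le> t \<Longrightarrow> m * (measure P {a. t < dist x a}) ^ (m - 1) \<le> HH m t"
      unfolding HH_def by (rule nnset.Hr_lower[OF nns])
    show "\<And>m. 1 \<le> m \<Longrightarrow> (\<lambda>a. HH m (dist x a)) \<in> borel_measurable P"
      unfolding HH_def by (rule nnset.Hr_meas[OF nns])
  qed
  have Eq: "E = (\<lambda>m. \<integral>\<omega>. \<bar>\<eta> (nn_point X \<Theta> \<psi> x m \<omega>) - \<eta> x\<bar> \<partial>M)"
    by (rule ext) (simp add: E_def)
  show ?thesis using A.main unfolding Eq P_def .
qed

end
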